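(* Suppose $\alpha>0$, $L>L_f$, and that $\nabla f$ is completely continuous from $L^2(\Omega)$ to $L^2(\Omega)$ (weakly convergent sequences are mapped to strongly convergent ones). Let $(u_k)$ be generated by the IHT method with parameter $L$ and let $u_{k_n}\rightharpoonup u^*$ weakly in $L^2(\Omega)$ for some subsequence. Then $u_{k_n}\to u^*$ strongly in $L^q(\Omega)$ for all $q\in[1,2)$, and $u^*$ satisfies $$u^*(x)\in H_{\frac{\beta}{L+\alpha},b}\Big(\frac{1}{L+\alpha}\big(Lu^*(x)-\nabla f(u^* )(x)\big)\Big)\quad\text{for a.a. }x\in\Omega.$$
   Context: Let $\Omega\subset\mathbb R^n$ be a bounded open set with Lebesgue measure. Fix $\alpha\ge0$, $\beta>0$, $b\in(0,+\infty]$ and set $U_{ad}:=\{v\in L^2(\Omega): |v(x)|\le b\text{ a.e. in }\Omega\}$. For $t\in\mathbb R$ let $|t|_0:=0$ if $t=0$ and $|t|_0:=1$ if $t\ne0$; for measurable $u$ let $\|u\|_0:=\operatorname{meas}\{x\in\Omega:u(x)\ne0\}$. Define $g(u):=\frac\alpha2\|u\|_{L^2(\Omega)}^2+\beta\|u\|_0$. The function $f:L^2(\Omega)\to\mathbb R$ is weakly lower semicontinuous, bounded from below and Fréchet differentiable; $\nabla f(u)\in L^2(\Omega)$ is the Riesz representative of its derivative, and $\nabla f$ is Lipschitz continuous on $L^2(\Omega)$ with constant $L_f$. IHT method: given $L>0$ and $u_0\in U_{ad}$, for $k=0,1,\dots$ let $u_{k+1}$ be a global solution of $\min_{u\in U_{ad}}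 f(u_k)+\int_\Omega\nabla f(u_k)(u-u_k)\,dx+\frac L2\|u-u_k\|_{L^2(\Omega)}^2+g(u)$ (a solution exists). For $s\ge0$ and $p\in\mathbb R$, $H_{s,b}(p)$ is the set of all $u\in\mathbb R$ satisfying one of: (i) $u=-b$ and $p\le-\max(b,b/2+s/b)$; (ii) $u=b$ and $p\ge\max(b,b/2+s/b)$; (iii) $u=p$ and $\sqrt{2s}\le|p|\le b$; (iv) $u=0$, $b\le\sqrt{2s}$ and $|p|\le b/2+s/b$; (v) $u=0$, $b\ge\sqrt{2s}$ and $|p|\le\sqrt{2s}$ (conditions (i),(ii),(iv) void if $b=+\infty$). *)

theory Defs
  imports "HOL-Analysis.Analysis"
begin

text \<open>The measure space: Lebesgue measure restricted to \<Omega>.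
  Elements of L^2(\<Omega>) are represented by functions; only their values on \<Omega> matter
  (and only up to a.e. equality).\<close>

definition L2 :: "'a::euclidean_space set \<Rightarrow> ('a \<Rightarrow> real) set" where
  "L2 \<Omega> = {u. u \<in> borel_measurable (lebesgue_on \<Omega>) \<and>
                 integrable (lebesgue_on \<Omega>) (\<lambda>x. (u x)\<^sup>2)}"

definition L2inner :: "'a::euclidean_space set \<Rightarrow> ('a \<Rightarrow> real) \<Rightarrow> ('a \<Rightarrow> real) \<Rightarrow> real" where
  "L2inner \<Omega> u v = (\<integral>x. u x * v x \<partial>lebesgue_on \<Omega>)"

definition L2norm :: "'a::euclidean_space set \<Rightarrow> ('a \<Rightarrow> real) \<Rightarrow> real" where
  "L2norm \<Omega> u = sqrt (\<integral>x. (u x)\<^sup>2 \<partial>lebesgue_on \<Omega>)"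

definition L0norm :: "'a::euclidean_space set \<Rightarrow> ('a \<Rightarrow> real) \<Rightarrow> real" where
  "L0norm \<Omega> u = measure (lebesgue_on \<Omega>) {x \<in> \<Omega>. u x \<noteq> 0}"

definition weak_conv_L2 :: "'a::euclidean_space set \<Rightarrow> (nat \<Rightarrow> 'a \<Rightarrow> real) \<Rightarrow> ('a \<Rightarrow> real) \<Rightarrow> bool" where
  "weak_conv_L2 \<Omega> w w0 \<longleftrightarrow>
     (\<forall>z \<in> L2 \<Omega>. (\<lambda>n. L2inner \<Omega> (w n) z) \<longlonglongrightarrow> L2inner \<Omega> w0 z)"

definition Uad :: "'a::euclidean_space set \<Rightarrow> ereal \<Rightarrow> ('a \<Rightarrow> real) set" where
  "Uad \<Omega> b = {v \<in> L2 \<Omega>. AE x in lebesgue_on \<Omega>. ereal \<bar>v x\<bar> \<le> b}"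

definition gfun :: "'a::euclidean_space set \<Rightarrow> real \<Rightarrow> real \<Rightarrow> ('a \<Rightarrow> real) \<Rightarrow> real" where
  "gfun \<Omega> \<alpha> \<beta> u = \<alpha> / 2 * (L2norm \<Omega> u)\<^sup>2 + \<beta> * L0norm \<Omega> u"

definition Hsb :: "real \<Rightarrow> ereal \<Rightarrow> real \<Rightarrow> real set" where
  "Hsb s b p = {u.
     (b \<noteq> \<infinity> \<and> u = - real_of_ereal b \<and>
        p \<le> - max (real_of_ereal b) (real_of_ereal b / 2 + s / real_of_ereal b)) \<or>
     (b \<noteq> \<infinity> \<and> u = real_of_ereal b \<and>
        p \<ge> max (real_of_ereal b) (real_of_ereal b / 2 + s / real_of_ereal b)) \<or>
     (u = p \<and> sqrt (2 * s) \<le> \<bar>p\<bar> \<and> ereal \<bar>p\<bar> \<le> b) \<or>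
     (b \<noteq> \<infinity> \<and> u = 0 \<and> b \<le> ereal (sqrt (2 * s)) \<and>
        \<bar>p\<bar> \<le> real_of_ereal b / 2 + s / real_of_ereal b) \<or>
     (u = 0 \<and> ereal (sqrt (2 * s)) \<le> b \<and> \<bar>p\<bar> \<le> sqrt (2 * s))}"

definition iht_model ::
  "'a::euclidean_space set \<Rightarrow> (('a \<Rightarrow> real) \<Rightarrow> real) \<Rightarrow> (('a \<Rightarrow> real) \<Rightarrow> ('a \<Rightarrow> real))
   \<Rightarrow> real \<Rightarrow> real \<Rightarrow> real \<Rightarrow> ('a \<Rightarrow> real) \<Rightarrow> ('a \<Rightarrow> real) \<Rightarrow> real" where
  "iht_model \<Omega> f gradf L \<alpha> \<beta> uk u =
     f uk + L2inner \<Omega> (gradf uk) (\<lambda>x. u x - uk x)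
     + L / 2 * (L2norm \<Omega> (\<lambda>x. u x - uk x))\<^sup>2 + gfun \<Omega> \<alpha> \<beta> u"

definition iht_sequence ::
  "'a::euclidean_space set \<Rightarrow> (('a \<Rightarrow> real) \<Rightarrow> real) \<Rightarrow> (('a \<Rightarrow> real) \<Rightarrow> ('a \<Rightarrow> real))
   \<Rightarrow> real \<Rightarrow> real \<Rightarrow> ereal \<Rightarrow> real \<Rightarrow> (nat \<Rightarrow> 'a \<Rightarrow> real) \<Rightarrow> bool" where
  "iht_sequence \<Omega> f gradf \<alpha> \<beta> b L u \<longleftrightarrow>
     u 0 \<in> Uad \<Omega> b \<and>
     (\<forall>k. u (Suc k) \<in> Uad \<Omega> b \<and>
          (\<forall>v \<in> Uad \<Omega> b. iht_model \<Omega> f gradf L \<alpha> \<beta> (u k) (u (Suc k))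
                           \<le> iht_model \<Omega> f gradf L \<alpha> \<beta> (u k) v))"

end

theory Submission
  imports Defs
begin


definition psi :: "real \<Rightarrow> real \<Rightarrow> real \<Rightarrow> real" where
  "psi s p c = (c - p)\<^sup>2 / 2 + s * (if c = 0 then 0 else 1)"

definition clipb :: "ereal \<Rightarrow> real \<Rightarrow> real" where
  "clipb b p = (if b = \<infinity> then p else max (- real_of_ereal b) (min (real_of_ereal b) p))"

definition feas :: "ereal \<Rightarrow> real \<Rightarrow> bool" where
  "feas b c \<longleftrightarrow> ereal \<bar>c\<bar> \<le> b"

lemma b_cases:
  assumes "b > 0"
  obtains "b = \<infinity>" | r where "b = ereal r" "r > 0"
  using assms by (cases b) auto

lemma clipb_feas: "b > 0 \<Longrightarrow> feas b (clipb b p)"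
  by (erule b_cases) (auto simp: feas_def clipb_def)

lemma clipb_abs: "b > 0 \<Longrightarrow> \<bar>clipb b p\<bar> \<le> \<bar>p\<bar>"
  by (erule b_cases) (auto simp: clipb_def)

lemma clipb_id: "b > 0 \<Longrightarrow> feas b p \<Longrightarrow> clipb b p = p"
  by (erule b_cases) (auto simp: feas_def clipb_def)

lemma clipb_nz: "b > 0 \<Longrightarrow> p \<noteq> 0 \<Longrightarrow> clipb b p \<noteq> 0"
  by (erule b_cases) (auto simp: clipb_def max_def min_def split: if_splits)

lemma clipb_opt: "b > 0 \<Longrightarrow> feas b c \<Longrightarrow> (clipb b p - p)\<^sup>2 \<le> (c - p)\<^sup>2"
proof -
  assume b: "b > 0" and c: "feas b c"
  have "\<bar>clipb b p - p\<bar> \<le> \<bar>c - p\<bar>"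
    using b c by (cases b) (auto simp: feas_def clipb_def max_def min_def)
  then show ?thesis using abs_le_square_iff by blast
qed

lemma feas0: "b > 0 \<Longrightarrow> feas b 0"
  by (simp add: feas_def zero_ereal_def[symmetric] less_imp_le)

lemma continuous_clipb: "continuous_on UNIV (clipb b)"
  unfolding clipb_def by (cases "b = \<infinity>") (auto intro!: continuous_intros)

definition bestp :: "real \<Rightarrow> ereal \<Rightarrow> real \<Rightarrow> real" where
  "bestp s b p = (if psi s p 0 \<le> psi s p (clipb b p) then 0 else clipb b p)"

lemma psi_nz: "c \<noteq> 0 \<Longrightarrow> psi s p c = (c - p)\<^sup>2 / 2 + s"
  by (simp add: psi_def)

lemma psi_z: "psi s p 0 = p\<^sup>2 / 2"
  by (simp add: psi_def)

lemma bestp_feas: "b > 0 \<Longrightarrow> feas b (bestp s b p)"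
  using clipb_feas[of b p] feas0[of b] by (auto simp: bestp_def)

lemma bestp_abs: "b > 0 \<Longrightarrow> \<bar>bestp s b p\<bar> \<le> \<bar>p\<bar>"
  using clipb_abs[of b p] by (auto simp: bestp_def)

lemma bestp_opt:
  assumes "b > 0" "s > 0" "feas b c"
  shows "psi s p (bestp s b p) \<le> psi s p c"
proof (cases "c = 0")
  case True then show ?thesis by (auto simp: bestp_def)
next
  case False
  have "psi s p (clipb b p) \<le> psi s p c"
  proof (cases "clipb b p = 0")
    case True
    then show ?thesis using False assms clipb_opt[OF assms(1) assms(3), of p]
      by (simp add: psi_def)
  next
    case False2: False
    then show ?thesis using False clipb_opt[OF assms(1) assms(3), of p]
      by (simp add: psi_def)
  qed
  then show ?thesis by (auto simp: bestp_def)
qed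

definition delta :: "real \<Rightarrow> ereal \<Rightarrow> real" where
  "delta s b = (if b = \<infinity> then sqrt (2 * s) else min (sqrt (2 * s)) (real_of_ereal b))"

lemma delta_pos: "s > 0 \<Longrightarrow> b > 0 \<Longrightarrow> delta s b > 0"
  by (erule b_cases) (auto simp: delta_def)

lemma opt_nz:
  assumes b: "b > 0" and s: "s > 0" and fa: "feas b a"
    and opt: "\<And>c. feas b c \<Longrightarrow> psi s p a \<le> psi s p c" and a: "a \<noteq> 0"
  shows "a = clipb b p \<and> \<bar>a\<bar> \<ge> delta s b"
proof -
  have o0: "psi s p a \<le> psi s p 0" using opt[of 0] b feas0 by blast
  hence p0: "p \<noteq> 0" using a s by (auto simp: psi_def) (smt (verit) zero_le_power2)
  hence cz: "clipb b p \<noteq> 0" using clipb_nz b by auto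
  have "psi s p a \<le> psi s p (clipb b p)" using opt clipb_feas b by blast
  hence le: "(a - p)\<^sup>2 \<le> (clipb b p - p)\<^sup>2" using a cz by (simp add: psi_def)
  show ?thesis
  proof (cases "feas b p")
    case True
    hence "clipb b p = p" using clipb_id b by auto
    hence ap: "a = p" using le by simp
    have "s \<le> p\<^sup>2/2" using o0 a ap by (simp add: psi_def)
    hence "2 * s \<le> \<bar>p\<bar>\<^sup>2" by simp
    hence "sqrt (2 * s) \<le> \<bar>p\<bar>" using real_le_lsqrt s by (metis abs_ge_zero real_sqrt_le_iff real_sqrt_abs real_sqrt_pow2 abs_of_nonneg power2_abs)
    then show ?thesis using ap \<open>clipb b p = p\<close> by (auto simp: delta_def)
  next
    case False
    then obtain r where r: "b = ereal r" "r > 0" "\<bar>p\<bar> > r" using b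
      by (cases b) (auto simp: feas_def)
    have ar: "\<bar>a\<bar> \<le> r" using fa r by (simp add: feas_def)
    show ?thesis
    proof (cases "p > 0")
      case True
      hence cp: "clipb b p = r" using r by (auto simp: clipb_def)
      have "(a - p)\<^sup>2 \<le> (r - p)\<^sup>2" using le cp by simp
      hence "\<bar>a - p\<bar> \<le> \<bar>r - p\<bar>" using abs_le_square_iff by blast
      hence "a = r" using ar r True by auto
      then show ?thesis using cp r by (auto simp: delta_def)
    next
      case False
      hence cp: "clipb b p = - r" using r by (auto simp: clipb_def)
      have "(a - p)\<^sup>2 \<le> (-r - p)\<^sup>2" using le cp by simp
      hence "\<bar>a - p\<bar> \<le> \<bar>-r - p\<bar>" using abs_le_square_iff by blast
      hence "a = -r" using ar r False by auto
      then show ?thesis using cp r by (auto simp: delta_def)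
    qed
  qed
qed

lemma opt_H:
  assumes b: "b > 0" and s: "s > 0" and fa: "feas b a"
    and opt: "\<And>c. feas b c \<Longrightarrow> psi s p a \<le> psi s p c"
  shows "a \<in> Hsb s b p"
proof (cases "a = 0")
  case False
  from opt_nz[OF b s fa opt False] have ac: "a = clipb b p" by blast
  have o0: "psi s p a \<le> psi s p 0" using opt feas0 b by blast
  show ?thesis
  proof (cases "feas b p")
    case True
    hence ap: "a = p" using ac clipb_id b by auto
    have "s \<le> p\<^sup>2/2" using o0 False ap by (simp add: psi_def)
    hence "2 * s \<le> \<bar>p\<bar>\<^sup>2" by simp
    hence "sqrt (2 * s) \<le> \<bar>p\<bar>" by (simp add: real_le_lsqrt real_sqrt_le_iff)
    then show ?thesis using ap True by (auto simp: Hsb_def feas_def)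
  next
    case nf: False
    then obtain r where r: "b = ereal r" "r > 0" "\<bar>p\<bar> > r" using b
      by (cases b) (auto simp: feas_def)
    show ?thesis
    proof (cases "p > 0")
      case True
      hence ar: "a = r" using r ac by (auto simp: clipb_def)
      have "(r - p)\<^sup>2/2 + s \<le> p\<^sup>2/2" using o0 ar r by (simp add: psi_def)
      moreover have "(r - p)\<^sup>2/2 = r^2/2 - r*p + p^2/2" by (simp add: power2_eq_square field_simps)
      moreover have "r * (r/2 + s/r) = r^2/2 + s" using r by (simp add: field_simps power2_eq_square)
      ultimately have "r * (r/2 + s/r) \<le> r * p" by (simp add: algebra_simps)
      hence "r/2 + s/r \<le> p" using r by simp
      then show ?thesis using ar r True by (auto simp: Hsb_def)
    next
      case False
      hence ar: "a = -r" using r ac by (auto simp: clipb_def)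
      have "(-r - p)\<^sup>2/2 + s \<le> p\<^sup>2/2" using o0 ar r by (simp add: psi_def)
      moreover have "(-r - p)\<^sup>2/2 = r^2/2 + r*p + p^2/2" by (simp add: power2_eq_square field_simps)
      moreover have "r * (r/2 + s/r) = r^2/2 + s" using r by (simp add: field_simps power2_eq_square)
      ultimately have "r * (r/2 + s/r) \<le> r * (-p)" by (simp add: algebra_simps)
      hence "r/2 + s/r \<le> -p" using r mult_le_cancel_left_pos[of r "r/2 + s/r" "-p"] by simp
      then show ?thesis using ar r False by (auto simp: Hsb_def)
    qed
  qed
next
  case True
  have key: "p\<^sup>2/2 \<le> psi s p c" if "feas b c" for c using opt[OF that] True by (simp add: psi_def)
  show ?thesis
  proof (cases "b = \<infinity>")
    case binf: True
    have "\<bar>p\<bar> \<le> sqrt (2 * s)"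
    proof (rule ccontr)
      assume "\<not> ?thesis"
      hence "sqrt (2 * s) < \<bar>p\<bar>" by simp
      hence "2 * s < \<bar>p\<bar>\<^sup>2" using s by (metis abs_ge_zero less_eq_real_def real_sqrt_less_iff real_sqrt_abs power2_abs real_less_rsqrt sqrt_le_D)
      moreover have "p \<noteq> 0" using \<open>sqrt (2 * s) < \<bar>p\<bar>\<close> s by auto
      moreover have "p\<^sup>2/2 \<le> psi s p p" using key[of p] binf by (simp add: feas_def)
      ultimately show False by (simp add: psi_def)
    qed
    then show ?thesis using True binf by (auto simp: Hsb_def)
  next
    case False
    then obtain r where r: "b = ereal r" "r > 0" using b by (cases b) auto
    have kr: "\<bar>p\<bar> \<le> r/2 + s/r"
    proof (cases "p = 0")
      case True then show ?thesis using r s by simp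
    next
      case False
      define c where "c = (if p > 0 then r else -r)"
      have fc: "feas b c" using r by (auto simp: feas_def c_def)
      have c0: "c \<noteq> 0" using r by (simp add: c_def)
      have "p\<^sup>2/2 \<le> (c - p)\<^sup>2/2 + s" using key[OF fc] c0 by (simp add: psi_def)
      moreover have "(c-p)^2/2 = r^2/2 - r*\<bar>p\<bar> + p^2/2" using False
        by (cases "p>0") (auto simp: c_def power2_eq_square field_simps)
      moreover have "r*(r/2+s/r) = r^2/2 + s" using r by (simp add: field_simps power2_eq_square)
      ultimately have "r * \<bar>p\<bar> \<le> r * (r/2 + s/r)" by linarith
      then show ?thesis using r by simp
    qed
    show ?thesis
    proof (cases "r \<le> sqrt (2 * s)")
      case True
      then show ?thesis using kr r \<open>a = 0\<close> by (auto simp: Hsb_def)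
    next
      case rs: False
      have "\<bar>p\<bar> \<le> sqrt (2 * s)"
      proof (rule ccontr)
        assume "\<not> ?thesis"
        hence sp: "sqrt (2 * s) < \<bar>p\<bar>" by simp
        hence "2 * s < \<bar>p\<bar>\<^sup>2" using s by (metis abs_ge_zero less_eq_real_def real_sqrt_less_iff real_sqrt_abs power2_abs real_less_rsqrt sqrt_le_D)
        show False
        proof (cases "\<bar>p\<bar> \<le> r")
          case True
          hence "p\<^sup>2/2 \<le> psi s p p" using key[of p] r by (simp add: feas_def)
          moreover have "p \<noteq> 0" using sp s by auto
          ultimately show False using \<open>2 * s < \<bar>p\<bar>\<^sup>2\<close> by (simp add: psi_def)
        next
          case False
          have "2 * s \<le> r\<^sup>2" using rs r s
            by (metis less_eq_real_def linorder_not_le real_sqrt_le_iff real_sqrt_pow2 real_sqrt_power power2_abs abs_of_nonneg sqrt_le_D)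
          hence "s / r \<le> r / 2" using r by (simp add: divide_simps power2_eq_square)
          then show False using kr False by linarith
        qed
      qed
      then show ?thesis using rs r \<open>a = 0\<close> by (auto simp: Hsb_def)
    qed
  qed
qed

lemma clip_rel:
  assumes La: "L + al > 0" and al: "al > 0" and b: "b > 0"
    and a: "a = clipb b p" and p: "p = (L * (a - d) - g) / (L + al)"
  shows "a = clipb b ((- g - L * d) / al)"
proof -
  have pe: "(L + al) * p = L * a - L * d - g" using p La by (simp add: field_simps)
  show ?thesis
  proof (cases "b = \<infinity>")
    case True
    then have "a = p" using a by (simp add: clipb_def)
    then have "al * a = - g - L * d" using pe by (simp add: algebra_simps)
    then show ?thesis using True al by (simp add: clipb_def field_simps)
  next
    case False
    then obtain r where r: "b = ereal r" "r > 0" using b by (cases b) auto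
    consider "\<bar>p\<bar> \<le> r" | "p > r" | "p < -r" by linarith
    then show ?thesis
    proof cases
      case 1
      then have "a = p" using a r by (auto simp: clipb_def)
      then have "al * a = - g - L * d" using pe by (simp add: algebra_simps)
      then have "a = (- g - L * d) / al" using al by (simp add: field_simps)
      moreover have "clipb b a = a" using 1 r \<open>a = p\<close> by (auto simp: clipb_def)
      ultimately show ?thesis by simp
    next
      case 2
      then have ar: "a = r" using a r by (auto simp: clipb_def)
      have "(L + al) * p > (L + al) * r" by (rule mult_strict_left_mono) (use 2 La in auto)
      then have "al * r < - g - L * d" using pe ar by (simp add: algebra_simps)
      then have "r < (- g - L * d) / al" using al by (simp add: field_simps)
      then show ?thesis using ar r by (auto simp: clipb_def)
    next
      case 3
      then have ar: "a = -r" using a r by (auto simp: clipb_def)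
      have "(L + al) * p < (L + al) * (-r)" by (rule mult_strict_left_mono) (use 3 La in auto)
      then have "al * (-r) > - g - L * d" using pe ar by (simp add: algebra_simps)
      then have "-r > (- g - L * d) / al" using al by (simp add: field_simps)
      then show ?thesis using ar r by (auto simp: clipb_def)
    qed
  qed
qed

lemma opt_limit:
  assumes b: "b > 0" and s: "s > 0"
    and pl: "pp \<longlonglongrightarrow> P" and al: "aa \<longlonglongrightarrow> w"
    and fa: "\<And>j. feas b (aa j)"
    and opt: "\<And>j c. feas b c \<Longrightarrow> psi s (pp j) (aa j) \<le> psi s (pp j) c"
  shows "feas b w \<and> (\<forall>c. feas b c \<longrightarrow> psi s P w \<le> psi s P c)"
proof
  have "ereal \<bar>w\<bar> \<le> b"
  proof (cases "b = \<infinity>")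
    case False
    then obtain r where r: "b = ereal r" using b by (cases b) auto
    have "\<bar>aa j\<bar> \<le> r" for j using fa[of j] r by (simp add: feas_def)
    moreover have "(\<lambda>j. \<bar>aa j\<bar>) \<longlonglongrightarrow> \<bar>w\<bar>" by (intro tendsto_intros al)
    ultimately have "\<bar>w\<bar> \<le> r" by (intro LIMSEQ_le_const2) auto
    then show ?thesis using r by simp
  qed simp
  then show "feas b w" by (simp add: feas_def)
  show "\<forall>c. feas b c \<longrightarrow> psi s P w \<le> psi s P c"
  proof safe
    fix c assume c: "feas b c"
    have lc: "(\<lambda>j. psi s (pp j) c) \<longlonglongrightarrow> psi s P c"
      unfolding psi_def by (auto intro!: tendsto_intros pl)
    show "psi s P w \<le> psi s P c"
    proof (cases "w = 0")
      case True
      have "(\<lambda>j. (aa j - pp j)\<^sup>2 / 2) \<longlonglongrightarrow> (w - P)\<^sup>2/2" by (auto intro!: tendsto_intros al pl)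
      moreover have "(aa j - pp j)\<^sup>2 / 2 \<le> psi s (pp j) c" for j
        using opt[OF c, of j] s by (auto simp: psi_def split: if_splits)
      ultimately have "(w - P)\<^sup>2/2 \<le> psi s P c" by (intro LIMSEQ_le[OF _ lc]) auto
      then show ?thesis using True by (simp add: psi_def)
    next
      case False
      have "eventually (\<lambda>j. aa j \<noteq> 0) sequentially"
        using tendsto_imp_eventually_ne[OF al False] .
      hence ev: "eventually (\<lambda>j. (aa j - pp j)\<^sup>2 / 2 + s \<le> psi s (pp j) c) sequentially"
      proof eventually_elim
        case (elim j) show ?case using opt[OF c, of j] elim by (simp add: psi_def)
      qed
      have "(\<lambda>j. (aa j - pp j)\<^sup>2 / 2 + s) \<longlonglongrightarrow> (w - P)\<^sup>2/2 + s" by (auto intro!: tendsto_intros al pl)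
      hence "(w - P)\<^sup>2/2 + s \<le> psi s P c" using tendsto_le[OF sequentially_bot lc _ ev] by blast
      then show ?thesis using False by (simp add: psi_def)
    qed
  qed
qed



locale dom =
  fixes \<Omega> :: "'a::euclidean_space set"
  assumes \<Omega>o: "open \<Omega>" and \<Omega>b: "bounded \<Omega>"
begin

lemma \<Omega>_lm: "\<Omega> \<in> lmeasurable" using lmeasurable_open[OF \<Omega>b \<Omega>o] .
lemma fin: "finite_measure (lebesgue_on \<Omega>)" using finite_measure_lebesgue_on[OF \<Omega>_lm] .
lemma \<Omega>_sets: "\<Omega> \<in> sets lebesgue" using \<Omega>_lm by auto
lemma int_const[simp, intro]: "integrable (lebesgue_on \<Omega>) (\<lambda>x. c :: real)"
  using finite_measure.integrable_const[OF fin] .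

lemma L2I: "u \<in> borel_measurable (lebesgue_on \<Omega>) \<Longrightarrow> integrable (lebesgue_on \<Omega>) (\<lambda>x. (u x)\<^sup>2) \<Longrightarrow> u \<in> L2 \<Omega>"
  by (simp add: L2_def)
lemma L2_meas[measurable_dest]: "u \<in> L2 \<Omega> \<Longrightarrow> u \<in> borel_measurable (lebesgue_on \<Omega>)"
  by (simp add: L2_def)
lemma L2_sq: "u \<in> L2 \<Omega> \<Longrightarrow> integrable (lebesgue_on \<Omega>) (\<lambda>x. (u x)\<^sup>2)"
  by (simp add: L2_def)

lemma L2_boundf:
  assumes "u \<in> borel_measurable (lebesgue_on \<Omega>)" "integrable (lebesgue_on \<Omega>) h"
    "AE x in lebesgue_on \<Omega>. (u x)\<^sup>2 \<le> h x"
  shows "u \<in> L2 \<Omega>"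
proof (rule L2I[OF assms(1)])
  show "integrable (lebesgue_on \<Omega>) (\<lambda>x. (u x)\<^sup>2)"
    by (rule Bochner_Integration.integrable_bound[OF assms(2)]) (use assms(1) assms(3) in auto)
qed

lemma L2_bound:
  assumes "u \<in> borel_measurable (lebesgue_on \<Omega>)" "w \<in> L2 \<Omega>"
    "AE x in lebesgue_on \<Omega>. \<bar>u x\<bar> \<le> \<bar>w x\<bar>"
  shows "u \<in> L2 \<Omega>"
  using assms(3) by (intro L2_boundf[OF assms(1) L2_sq[OF assms(2)]])
     (auto elim!: AE_mp intro!: AE_I2 simp: abs_le_square_iff[symmetric])

lemma L2_prod:
  assumes "u \<in> L2 \<Omega>" "v \<in> L2 \<Omega>"
  shows "integrable (lebesgue_on \<Omega>) (\<lambda>x. u x * v x)"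
proof (rule Bochner_Integration.integrable_bound)
  show "integrable (lebesgue_on \<Omega>) (\<lambda>x. (u x)\<^sup>2 + (v x)\<^sup>2)"
    using L2_sq[OF assms(1)] L2_sq[OF assms(2)] by auto
  show "(\<lambda>x. u x * v x) \<in> borel_measurable (lebesgue_on \<Omega>)" using assms by measurable
  have "\<bar>u x * v x\<bar> \<le> (u x)\<^sup>2 + (v x)\<^sup>2" for x
  proof -
    have "0 \<le> (\<bar>u x\<bar> - \<bar>v x\<bar>)\<^sup>2" by simp
    hence "2 * (\<bar>u x\<bar> * \<bar>v x\<bar>) \<le> (u x)\<^sup>2 + (v x)\<^sup>2"
      by (simp add: power2_diff power2_abs)
    moreover have "0 \<le> \<bar>u x\<bar> * \<bar>v x\<bar>" by simp
    ultimately show ?thesis unfolding abs_mult by linarith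
  qed
  then show "AE x in lebesgue_on \<Omega>. norm (u x * v x) \<le> norm ((u x)\<^sup>2 + (v x)\<^sup>2)" by auto
qed

lemma L2_const[simp, intro]: "(\<lambda>x. c) \<in> L2 \<Omega>"
  by (rule L2I) auto

lemma L2_int: "u \<in> L2 \<Omega> \<Longrightarrow> integrable (lebesgue_on \<Omega>) u"
  using L2_prod[of u "\<lambda>x. 1"] by auto

lemma L2_add[intro]: "u \<in> L2 \<Omega> \<Longrightarrow> v \<in> L2 \<Omega> \<Longrightarrow> (\<lambda>x. u x + v x) \<in> L2 \<Omega>"
proof (rule L2_boundf)
  assume "u \<in> L2 \<Omega>" "v \<in> L2 \<Omega>"
  then show "(\<lambda>x. u x + v x) \<in> borel_measurable (lebesgue_on \<Omega>)" by measurable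
  show "integrable (lebesgue_on \<Omega>) (\<lambda>x. 2 * (u x)\<^sup>2 + 2 * (v x)\<^sup>2)"
    using L2_sq[OF \<open>u \<in> L2 \<Omega>\<close>] L2_sq[OF \<open>v \<in> L2 \<Omega>\<close>] by auto
  have "(u x + v x)\<^sup>2 \<le> 2 * (u x)\<^sup>2 + 2 * (v x)\<^sup>2" for x
  proof -
    have "0 \<le> (u x - v x)\<^sup>2" by simp
    then show ?thesis by (simp add: power2_diff power2_sum)
  qed
  then show "AE x in lebesgue_on \<Omega>. (u x + v x)\<^sup>2 \<le> 2 * (u x)\<^sup>2 + 2 * (v x)\<^sup>2" by auto
qed
lemma L2_scale[intro]: "u \<in> L2 \<Omega> \<Longrightarrow> (\<lambda>x. c * u x) \<in> L2 \<Omega>"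
  by (rule L2I) (auto simp: power_mult_distrib intro!: L2_sq)
lemma L2_neg[intro]: "u \<in> L2 \<Omega> \<Longrightarrow> (\<lambda>x. - u x) \<in> L2 \<Omega>"
  using L2_scale[of u "-1"] by simp
lemma L2_diff[intro]: "u \<in> L2 \<Omega> \<Longrightarrow> v \<in> L2 \<Omega> \<Longrightarrow> (\<lambda>x. u x - v x) \<in> L2 \<Omega>"
  using L2_add[of u "\<lambda>x. - v x"] by auto
lemma L2_abs[intro]: "u \<in> L2 \<Omega> \<Longrightarrow> (\<lambda>x. \<bar>u x\<bar>) \<in> L2 \<Omega>"
  by (rule L2I) (auto intro!: L2_sq)

lemma L2norm_sq: "u \<in> L2 \<Omega> \<Longrightarrow> (L2norm \<Omega> u)\<^sup>2 = (\<integral>x. (u x)\<^sup>2 \<partial>lebesgue_on \<Omega>)"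
  unfolding L2norm_def by (simp add: integral_nonneg_AE)
lemma L2norm_nonneg: "L2norm \<Omega> u \<ge> 0"
  unfolding L2norm_def by (simp add: integral_nonneg_AE)

lemma L2inner_diff:
  "a \<in> L2 \<Omega> \<Longrightarrow> b \<in> L2 \<Omega> \<Longrightarrow> h \<in> L2 \<Omega> \<Longrightarrow>
   L2inner \<Omega> a h - L2inner \<Omega> b h = L2inner \<Omega> (\<lambda>x. a x - b x) h"
  unfolding L2inner_def by (simp add: left_diff_distrib L2_prod)

lemma L2inner_scale:
  "L2inner \<Omega> a (\<lambda>x. t * h x) = t * L2inner \<Omega> a h"
  unfolding L2inner_def by (simp add: algebra_simps)

lemma L2norm_scale:
  "L2norm \<Omega> (\<lambda>x. t * h x) = \<bar>t\<bar> * L2norm \<Omega> h"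
  unfolding L2norm_def by (simp add: power_mult_distrib real_sqrt_mult)

lemma cauchy_schwarz:
  assumes u: "u \<in> L2 \<Omega>" and v: "v \<in> L2 \<Omega>"
  shows "L2inner \<Omega> u v \<le> L2norm \<Omega> u * L2norm \<Omega> v"
proof -
  define A where "A = (\<integral>x. (u x)\<^sup>2 \<partial>lebesgue_on \<Omega>)"
  define B where "B = (\<integral>x. (v x)\<^sup>2 \<partial>lebesgue_on \<Omega>)"
  define I where "I = L2inner \<Omega> u v"
  have B0: "B \<ge> 0" unfolding B_def by (simp add: integral_nonneg_AE)
  have A0: "A \<ge> 0" unfolding A_def by (simp add: integral_nonneg_AE)
  have q: "0 \<le> A - 2 * t * I + t\<^sup>2 * B" for t
  proof -
    have "0 \<le> (\<integral>x. (u x - t * v x)\<^sup>2 \<partial>lebesgue_on \<Omega>)" by (simp add: integral_nonneg_AE)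
    also have "\<dots> = (\<integral>x. (u x)\<^sup>2 - 2 * t * (u x * v x) + t\<^sup>2 * (v x)\<^sup>2 \<partial>lebesgue_on \<Omega>)"
      by (simp add: power2_diff power_mult_distrib algebra_simps)
    also have "\<dots> = A - 2 * t * I + t\<^sup>2 * B"
      unfolding A_def B_def I_def L2inner_def
      using L2_sq[OF u] L2_sq[OF v] L2_prod[OF u v] by simp
    finally show ?thesis .
  qed
  have "I\<^sup>2 \<le> A * B"
  proof (cases "B = 0")
    case True
    have "I = 0"
    proof (rule ccontr)
      assume "I \<noteq> 0"
      from q[of "(A + 1) / (2 * I)"] True \<open>I \<noteq> 0\<close> show False by (simp add: field_simps)
    qed
    then show ?thesis using A0 B0 by simp
  next
    case False
    hence Bp: "B > 0" using B0 by simp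
    from q[of "I / B"] have "0 \<le> A - 2 * (I / B) * I + (I / B)\<^sup>2 * B" .
    also have "\<dots> = A - I\<^sup>2 / B" using Bp by (simp add: field_simps power2_eq_square)
    finally show ?thesis using Bp by (simp add: field_simps)
  qed
  hence "\<bar>I\<bar> \<le> sqrt A * sqrt B"
    by (metis A0 B0 real_sqrt_abs real_sqrt_le_mono real_sqrt_mult)
  then show ?thesis unfolding I_def L2norm_def A_def B_def by simp
qed

end



locale smooth = dom \<Omega> for \<Omega> :: "'a::euclidean_space set" +
  fixes f :: "('a \<Rightarrow> real) \<Rightarrow> real" and gradf :: "('a \<Rightarrow> real) \<Rightarrow> ('a \<Rightarrow> real)" and Lf :: real
  assumes gradf_L2: "\<And>v. v \<in> L2 \<Omega> \<Longrightarrow> gradf v \<in> L2 \<Omega>"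
    and f_frechet: "\<And>v \<epsilon>. v \<in> L2 \<Omega> \<Longrightarrow> \<epsilon> > 0 \<Longrightarrow>
                 \<exists>\<delta>>0. \<forall>h \<in> L2 \<Omega>. L2norm \<Omega> h < \<delta> \<longrightarrow>
                   \<bar>f (\<lambda>x. v x + h x) - f v - L2inner \<Omega> (gradf v) h\<bar> \<le> \<epsilon> * L2norm \<Omega> h"
    and gradf_lip: "\<And>v w. v \<in> L2 \<Omega> \<Longrightarrow> w \<in> L2 \<Omega> \<Longrightarrow>
                 L2norm \<Omega> (\<lambda>x. gradf v x - gradf w x) \<le> Lf * L2norm \<Omega> (\<lambda>x. v x - w x)"
begin

lemma line_deriv:
  assumes u: "u \<in> L2 \<Omega>" and h: "h \<in> L2 \<Omega>"
  shows "DERIV (\<lambda>t. f (\<lambda>x. u x + t * h x)) t0 :> L2inner \<Omega> (gradf (\<lambda>x. u x + t0 * h x)) h"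
proof -
  define w where "w = (\<lambda>x. u x + t0 * h x)"
  have w: "w \<in> L2 \<Omega>" unfolding w_def using u h by auto
  define N where "N = L2norm \<Omega> h"
  have N0: "N \<ge> 0" unfolding N_def by (rule L2norm_nonneg)
  define D where "D = L2inner \<Omega> (gradf w) h"
  have shift: "(\<lambda>x. u x + (t0 + \<tau>) * h x) = (\<lambda>x. w x + \<tau> * h x)" for \<tau>
    unfolding w_def by (auto simp: algebra_simps)
  show ?thesis
    unfolding DERIV_def LIM_eq
  proof (intro allI impI)
    fix r :: real assume r: "r > 0"
    define \<epsilon> where "\<epsilon> = r / (2 * (N + 1))"
    have \<epsilon>: "\<epsilon> > 0" unfolding \<epsilon>_def using r N0 by simp
    obtain \<delta> where \<delta>: "\<delta> > 0" and fr: "\<And>k. k \<in> L2 \<Omega> \<Longrightarrow> L2norm \<Omega> k < \<delta> \<Longrightarrow>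
        \<bar>f (\<lambda>x. w x + k x) - f w - L2inner \<Omega> (gradf w) k\<bar> \<le> \<epsilon> * L2norm \<Omega> k"
      using f_frechet[OF w \<epsilon>] by blast
    show "\<exists>s>0. \<forall>\<tau>. \<tau> \<noteq> 0 \<and> norm (\<tau> - 0) < s \<longrightarrow>
        norm ((f (\<lambda>x. u x + (t0 + \<tau>) * h x) - f (\<lambda>x. u x + t0 * h x)) / \<tau> -
              L2inner \<Omega> (gradf (\<lambda>x. u x + t0 * h x)) h) < r"
    proof (intro exI[of _ "\<delta> / (N + 1)"] conjI allI impI)
      show "\<delta> / (N + 1) > 0" using \<delta> N0 by simp
      fix \<tau> :: real assume \<tau>: "\<tau> \<noteq> 0 \<and> norm (\<tau> - 0) < \<delta> / (N + 1)"
      have "\<bar>\<tau>\<bar> * N \<le> \<bar>\<tau>\<bar> * (N + 1)" by (rule mult_left_mono) auto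
      also have "\<dots> < \<delta>" using \<tau> N0 by (simp add: field_simps)
      finally have lt: "L2norm \<Omega> (\<lambda>x. \<tau> * h x) < \<delta>" by (simp add: L2norm_scale N_def)
      from fr[OF _ lt] h have
        "\<bar>f (\<lambda>x. w x + \<tau> * h x) - f w - \<tau> * D\<bar> \<le> \<epsilon> * (\<bar>\<tau>\<bar> * N)"
        by (auto simp: L2inner_scale L2norm_scale D_def N_def)
      hence "\<bar>(f (\<lambda>x. w x + \<tau> * h x) - f w) / \<tau> - D\<bar> \<le> \<epsilon> * N"
        using \<tau> by (simp add: field_simps abs_divide)
      also have "\<epsilon> * N < r"
      proof -
        have "0 \<le> N * r" using r N0 by simp
        then show ?thesis unfolding \<epsilon>_def using r N0 apply (simp add: field_simps)
          using \<open>0 \<le> N * r\<close> r by linarith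
      qed
      finally show "norm ((f (\<lambda>x. u x + (t0 + \<tau>) * h x) - f (\<lambda>x. u x + t0 * h x)) / \<tau> -
              L2inner \<Omega> (gradf (\<lambda>x. u x + t0 * h x)) h) < r"
        using shift[of \<tau>] by (simp add: w_def[symmetric] D_def)
    qed
  qed
qed

lemma descent:
  assumes u: "u \<in> L2 \<Omega>" and v: "v \<in> L2 \<Omega>"
  shows "f v \<le> f u + L2inner \<Omega> (gradf u) (\<lambda>x. v x - u x) + Lf / 2 * (L2norm \<Omega> (\<lambda>x. v x - u x))\<^sup>2"
proof -
  define h where "h = (\<lambda>x. v x - u x)"
  have h: "h \<in> L2 \<Omega>" unfolding h_def using u v by auto
  define N where "N = L2norm \<Omega> h"
  have N0: "N \<ge> 0" unfolding N_def by (rule L2norm_nonneg)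
  define G where "G = L2inner \<Omega> (gradf u) h"
  define \<psi> where "\<psi> t = f (\<lambda>x. u x + t * h x) - t * G - Lf / 2 * t\<^sup>2 * N\<^sup>2" for t
  have "\<psi> 1 \<le> \<psi> 0"
  proof (rule DERIV_nonpos_imp_nonincreasing[of 0 1])
    fix t :: real assume t0: "0 \<le> t" and t1: "t \<le> 1"
    have t: "0 \<le> t \<and> t \<le> 1" using t0 t1 by simp
    define wt where "wt = (\<lambda>x. u x + t * h x)"
    have wt: "wt \<in> L2 \<Omega>" unfolding wt_def using u h by auto
    have d: "DERIV \<psi> t :> L2inner \<Omega> (gradf wt) h - G - Lf / 2 * (2 * t) * N\<^sup>2"
      unfolding \<psi>_def wt_def
      by (auto intro!: derivative_eq_intros line_deriv[OF u h] simp: power2_eq_square)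
    have "L2inner \<Omega> (gradf wt) h - G = L2inner \<Omega> (\<lambda>x. gradf wt x - gradf u x) h"
      unfolding G_def by (rule L2inner_diff) (use wt u h gradf_L2 in auto)
    also have "\<dots> \<le> L2norm \<Omega> (\<lambda>x. gradf wt x - gradf u x) * N"
      unfolding N_def by (rule cauchy_schwarz) (use wt u h gradf_L2 in auto)
    also have "\<dots> \<le> (Lf * L2norm \<Omega> (\<lambda>x. wt x - u x)) * N"
      by (rule mult_right_mono[OF gradf_lip[OF wt u] N0])
    also have "(\<lambda>x. wt x - u x) = (\<lambda>x. t * h x)" unfolding wt_def by auto
    also have "(Lf * L2norm \<Omega> (\<lambda>x. t * h x)) * N = Lf / 2 * (2 * t) * N\<^sup>2"
      using t by (simp add: L2norm_scale N_def power2_eq_square)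
    finally show "\<exists>y. DERIV \<psi> t :> y \<and> y \<le> 0" using d by (intro exI[of _ _]) auto
  qed simp
  moreover have "(\<lambda>x. u x + 1 * h x) = v" unfolding h_def by auto
  moreover have "(\<lambda>x. u x + 0 * h x) = u" by auto
  ultimately show ?thesis unfolding \<psi>_def G_def N_def h_def by simp
qed

end



context dom begin

lemma L0norm_int: "L0norm \<Omega> v = (\<integral>x. (if v x = 0 then 0 else 1) \<partial>lebesgue_on \<Omega>)"
proof -
  have "(\<integral>x. (if v x = 0 then 0 else 1) \<partial>lebesgue_on \<Omega>) =
        (\<integral>x. indicator {x. v x \<noteq> 0} x \<partial>lebesgue_on \<Omega>)"
    by (intro Bochner_Integration.integral_cong) (auto simp: indicator_def)
  also have "\<dots> = measure (lebesgue_on \<Omega>) ({x. v x \<noteq> 0} \<inter> \<Omega>)" by simp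
  also have "{x. v x \<noteq> 0} \<inter> \<Omega> = {x \<in> \<Omega>. v x \<noteq> 0}" by auto
  finally show ?thesis unfolding L0norm_def by simp
qed

lemma Uad_L2: "v \<in> Uad \<Omega> b \<Longrightarrow> v \<in> L2 \<Omega>" by (simp add: Uad_def)
lemma Uad_feas: "v \<in> Uad \<Omega> b \<Longrightarrow> AE x in lebesgue_on \<Omega>. feas b (v x)"
  by (simp add: Uad_def feas_def)

end

lemma pw_id:
  fixes A L al g u c p be I :: real
  assumes A: "A = L + al" "A > 0" and Ap: "A * p = L * u - g"
  shows "g * (c - u) + L / 2 * (c - u)\<^sup>2 + al / 2 * c\<^sup>2 + be * I
     = (- g * u + L / 2 * u\<^sup>2 - A / 2 * p\<^sup>2) + A * ((c - p)\<^sup>2 / 2 + be / A * I)"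
proof -
  have "A * ((c - p)\<^sup>2 / 2 + be / A * I) = A / 2 * c\<^sup>2 - c * (A * p) + A / 2 * p\<^sup>2 + be * I"
    using A by (simp add: power2_diff field_simps)
  also have "\<dots> = (L + al) / 2 * c\<^sup>2 - c * (L * u - g) + A / 2 * p\<^sup>2 + be * I"
    using A Ap by simp
  finally show ?thesis by (simp add: power2_diff algebra_simps)
qed

lemma clipb_meas[measurable]: "clipb b \<in> borel_measurable borel"
  by (rule borel_measurable_continuous_onI[OF continuous_clipb])

lemma psi_meas:
  fixes F G :: "'b \<Rightarrow> real"
  assumes [measurable]: "F \<in> borel_measurable N" "G \<in> borel_measurable N"
  shows "(\<lambda>x. psi s (F x) (G x)) \<in> borel_measurable N"
proof -
  have [measurable]: "(\<lambda>x. (if G x = 0 then 0 else 1 :: real)) \<in> borel_measurable N"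
    by (rule measurable_If) (auto simp: pred_def)
  show ?thesis unfolding psi_def by measurable
qed

context smooth begin

lemma model_eq:
  assumes uk: "uk \<in> L2 \<Omega>" and v: "v \<in> L2 \<Omega>" and La: "L + al > 0"
  defines "p \<equiv> (\<lambda>x. (L * uk x - gradf uk x) / (L + al))"
  defines "K \<equiv> (\<lambda>x. - gradf uk x * uk x + L / 2 * (uk x)\<^sup>2 - (L + al) / 2 * (p x)\<^sup>2)"
  shows "iht_model \<Omega> f gradf L al be uk v =
     f uk + (\<integral>x. K x \<partial>lebesgue_on \<Omega>) + (L + al) * (\<integral>x. psi (be / (L + al)) (p x) (v x) \<partial>lebesgue_on \<Omega>)"
proof -
  let ?M = "lebesgue_on \<Omega>"
  have g: "gradf uk \<in> L2 \<Omega>" using gradf_L2[OF uk] .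
  have p: "p \<in> L2 \<Omega>" unfolding p_def using L2_scale[OF L2_diff[OF L2_scale[OF uk, of L] g], of "1/(L+al)"]
    by simp
  define I where "I = (\<lambda>x. (if v x = 0 then 0 else 1 :: real))"
  have Im: "I \<in> borel_measurable ?M" unfolding I_def using v by measurable
  have Ii: "integrable ?M I"
    by (rule Bochner_Integration.integrable_bound[OF int_const[of 1] Im]) (auto simp: I_def)
  have ps: "psi (be / (L + al)) (p x) (v x) = (v x - p x)\<^sup>2 / 2 + be / (L + al) * I x" for x
    by (simp add: psi_def I_def)
  have pw: "gradf uk x * (v x - uk x) + L / 2 * (v x - uk x)\<^sup>2 + al / 2 * (v x)\<^sup>2 + be * I x
      = K x + (L + al) * ((v x - p x)\<^sup>2 / 2 + be / (L + al) * I x)" for x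
    unfolding K_def by (rule pw_id) (use La in \<open>auto simp: p_def\<close>)
  have i1: "integrable ?M (\<lambda>x. gradf uk x * (v x - uk x))" using L2_prod[OF g L2_diff[OF v uk]] .
  have i2: "integrable ?M (\<lambda>x. (v x - uk x)\<^sup>2)" using L2_sq[OF L2_diff[OF v uk]] .
  have i3: "integrable ?M (\<lambda>x. (v x)\<^sup>2)" using L2_sq[OF v] .
  have i4: "integrable ?M (\<lambda>x. (v x - p x)\<^sup>2)" using L2_sq[OF L2_diff[OF v p]] .
  have iK: "integrable ?M K" unfolding K_def
    using L2_prod[OF g uk] L2_sq[OF uk] L2_sq[OF p] by (auto simp: p_def)
  have "iht_model \<Omega> f gradf L al be uk v = f uk + ((\<integral>x. gradf uk x * (v x - uk x) \<partial>?M)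
       + L / 2 * (\<integral>x. (v x - uk x)\<^sup>2 \<partial>?M) + al / 2 * (\<integral>x. (v x)\<^sup>2 \<partial>?M) + be * (\<integral>x. I x \<partial>?M))"
    unfolding iht_model_def gfun_def L2inner_def L0norm_int I_def[symmetric]
    using L2norm_sq[OF L2_diff[OF v uk]] L2norm_sq[OF v] by simp
  also have "(\<integral>x. gradf uk x * (v x - uk x) \<partial>?M)
       + L / 2 * (\<integral>x. (v x - uk x)\<^sup>2 \<partial>?M) + al / 2 * (\<integral>x. (v x)\<^sup>2 \<partial>?M) + be * (\<integral>x. I x \<partial>?M)
     = (\<integral>x. gradf uk x * (v x - uk x) + L / 2 * (v x - uk x)\<^sup>2 + al / 2 * (v x)\<^sup>2 + be * I x \<partial>?M)"
    using i1 i2 i3 Ii by simp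
  also have "\<dots> = (\<integral>x. K x + (L + al) * ((v x - p x)\<^sup>2 / 2 + be / (L + al) * I x) \<partial>?M)"
    using pw by simp
  also have "\<dots> = (\<integral>x. K x \<partial>?M) + (L + al) * (\<integral>x. (v x - p x)\<^sup>2 / 2 + be / (L + al) * I x \<partial>?M)"
    using iK i4 Ii by simp
  finally show ?thesis using ps by simp
qed

lemma pointwise_opt:
  assumes uk: "uk \<in> L2 \<Omega>" and u1: "u1 \<in> Uad \<Omega> b" and La: "L + al > 0" and b: "b > 0"
    and be: "be > 0"
    and mn: "\<forall>v \<in> Uad \<Omega> b. iht_model \<Omega> f gradf L al be uk u1 \<le> iht_model \<Omega> f gradf L al be uk v"
  shows "AE x in lebesgue_on \<Omega>. \<forall>c. feas b c \<longrightarrow>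
           psi (be / (L + al)) ((L * uk x - gradf uk x) / (L + al)) (u1 x)
           \<le> psi (be / (L + al)) ((L * uk x - gradf uk x) / (L + al)) c"
proof -
  let ?M = "lebesgue_on \<Omega>"
  define s where "s = be / (L + al)"
  have s: "s > 0" unfolding s_def using be La by simp
  define p where "p = (\<lambda>x. (L * uk x - gradf uk x) / (L + al))"
  have g: "gradf uk \<in> L2 \<Omega>" using gradf_L2[OF uk] .
  have p: "p \<in> L2 \<Omega>" unfolding p_def using L2_scale[OF L2_diff[OF L2_scale[OF uk, of L] g], of "1/(L+al)"]
    by simp
  have u1L: "u1 \<in> L2 \<Omega>" using u1 by (rule Uad_L2)
  define Q where "Q = (\<lambda>v. \<integral>x. psi s (p x) (v x) \<partial>?M)"
  have Qle: "Q u1 \<le> Q v" if "v \<in> Uad \<Omega> b" for v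
  proof -
    have "iht_model \<Omega> f gradf L al be uk u1 \<le> iht_model \<Omega> f gradf L al be uk v" using mn that by blast
    then have "(L + al) * Q u1 \<le> (L + al) * Q v"
      unfolding model_eq[OF uk u1L La] model_eq[OF uk Uad_L2[OF that] La] Q_def s_def p_def by simp
    then show ?thesis using La by simp
  qed
  have psim: "(\<lambda>x. psi s (p x) (v x)) \<in> borel_measurable ?M" if "v \<in> L2 \<Omega>" for v
    by (rule psi_meas[OF L2_meas[OF p] L2_meas[OF that]])
  have psii: "integrable ?M (\<lambda>x. psi s (p x) (v x))" if v: "v \<in> L2 \<Omega>" for v
  proof (rule Bochner_Integration.integrable_bound)
    show "integrable ?M (\<lambda>x. (v x - p x)\<^sup>2 / 2 + s)" using L2_sq[OF L2_diff[OF v p]] by simp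
    show "(\<lambda>x. psi s (p x) (v x)) \<in> borel_measurable ?M" using psim[OF v] .
    show "AE x in ?M. norm (psi s (p x) (v x)) \<le> norm ((v x - p x)\<^sup>2 / 2 + s)"
      using s by (auto simp: psi_def)
  qed
  define best where "best = (\<lambda>x. bestp s b (p x))"
  have bestm: "best \<in> borel_measurable ?M"
  proof -
    have pm[measurable]: "p \<in> borel_measurable ?M" using L2_meas[OF p] .
    have cm[measurable]: "(\<lambda>x. clipb b (p x)) \<in> borel_measurable ?M" by measurable
    note psi_meas[OF pm, of "\<lambda>x. 0", measurable] psi_meas[OF pm cm, measurable]
    have "(\<lambda>x. if psi s (p x) 0 \<le> psi s (p x) (clipb b (p x)) then 0 else clipb b (p x)) \<in> borel_measurable ?M"
      by measurable
    then show ?thesis unfolding best_def bestp_def .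
  qed
  have bestL: "best \<in> L2 \<Omega>"
    by (rule L2_bound[OF bestm p]) (auto simp: best_def intro!: bestp_abs b)
  define vs where "vs = (\<lambda>x. if psi s (p x) (best x) < psi s (p x) (u1 x) then best x else u1 x)"
  have vsm: "vs \<in> borel_measurable ?M"
  proof -
    have pm[measurable]: "p \<in> borel_measurable ?M" using L2_meas[OF p] .
    have um[measurable]: "u1 \<in> borel_measurable ?M" using L2_meas[OF u1L] .
    note psi_meas[OF pm bestm, measurable] psi_meas[OF pm um, measurable] bestm[measurable]
    show ?thesis unfolding vs_def by measurable
  qed
  have vsL: "vs \<in> L2 \<Omega>"
  proof (rule L2_bound[OF vsm L2_add[OF L2_abs[OF u1L] L2_abs[OF p]]])
    show "AE x in ?M. \<bar>vs x\<bar> \<le> \<bar>\<bar>u1 x\<bar> + \<bar>p x\<bar>\<bar>"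
      using bestp_abs[OF b] by (auto simp: vs_def best_def intro!: AE_I2 order_trans[OF bestp_abs[OF b]])
  qed
  have vsU: "vs \<in> Uad \<Omega> b"
  proof -
    have "AE x in ?M. feas b (vs x)"
      using Uad_feas[OF u1] by eventually_elim (auto simp: vs_def best_def bestp_feas[OF b])
    then show ?thesis using vsL unfolding Uad_def feas_def by simp
  qed
  define D where "D = (\<lambda>x. psi s (p x) (vs x) - psi s (p x) (u1 x))"
  have Dle: "D x \<le> 0" for x unfolding D_def vs_def by auto
  have Di: "integrable ?M D" unfolding D_def using psii[OF vsL] psii[OF u1L] by simp
  have "integral\<^sup>L ?M D = Q vs - Q u1" unfolding D_def Q_def using psii[OF vsL] psii[OF u1L] by simp
  hence "integral\<^sup>L ?M D \<ge> 0" using Qle[OF vsU] by simp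
  hence "integral\<^sup>L ?M (\<lambda>x. - D x) = 0" using Dle integral_nonneg_AE[of "\<lambda>x. - D x" ?M] by simp
  hence "AE x in ?M. - D x = 0" using integral_nonneg_eq_0_iff_AE[of ?M "\<lambda>x. - D x"] Di Dle by simp
  then show ?thesis
  proof eventually_elim
    case (elim x)
    have "psi s (p x) (u1 x) \<le> psi s (p x) (best x)"
      using elim unfolding D_def vs_def by (auto split: if_splits)
    then have "\<forall>c. feas b c \<longrightarrow> psi s (p x) (u1 x) \<le> psi s (p x) c"
      using bestp_opt[OF b s] unfolding best_def by (meson order_trans)
    then show ?case by (simp add: s_def p_def)
  qed
qed

end



lemma subseq_small:
  fixes X :: "nat \<Rightarrow> real"
  assumes "X \<longlonglongrightarrow> 0"
  shows "\<exists>r. strict_mono r \<and> (\<forall>j. \<bar>X (r j)\<bar> \<le> (1/2)^j)"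
proof -
  have "\<forall>j. \<exists>N. \<forall>n\<ge>N. \<bar>X n\<bar> \<le> (1/2)^j"
  proof
    fix j :: nat
    have "eventually (\<lambda>n. dist (X n) 0 < (1/2)^j) sequentially"
      using assms[unfolded tendsto_iff] by simp
    then obtain N where "\<forall>n\<ge>N. \<bar>X n\<bar> < (1/2)^j"
      unfolding eventually_sequentially by (auto simp: dist_real_def)
    then show "\<exists>N. \<forall>n\<ge>N. \<bar>X n\<bar> \<le> (1/2)^j" by (intro exI[of _ N]) (auto intro: less_imp_le)
  qed
  then obtain N where N: "\<And>j n. n \<ge> N j \<Longrightarrow> \<bar>X n\<bar> \<le> (1/2)^j" by metis
  define r where "r j = j + (\<Sum>i\<le>j. N i)" for j
  have "strict_mono r" unfolding strict_mono_Suc_iff r_def by simp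
  moreover have "r j \<ge> N j" for j
  proof -
    have "N j \<le> (\<Sum>i\<le>j. N i)" by (rule member_le_sum) auto
    then show ?thesis unfolding r_def by simp
  qed
  ultimately show ?thesis using N by blast
qed

primrec sel :: "(nat \<Rightarrow> nat) \<Rightarrow> nat \<Rightarrow> nat" where
  "sel g 0 = g 0"
| "sel g (Suc j) = g (Suc (sel g j))"

lemma subseq_principle:
  fixes a :: "nat \<Rightarrow> real"
  assumes H: "\<And>\<sigma> :: nat \<Rightarrow> nat. strict_mono \<sigma> \<Longrightarrow> \<exists>\<tau>. strict_mono \<tau> \<and> (\<lambda>j. a (\<sigma> (\<tau> j))) \<longlonglongrightarrow> 0"
  shows "a \<longlonglongrightarrow> 0"
proof (rule ccontr)
  assume "\<not> a \<longlonglongrightarrow> 0"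
  then obtain e where e: "e > 0" and fr: "\<forall>N. \<exists>n\<ge>N. \<bar>a n\<bar> \<ge> e"
    unfolding LIMSEQ_def dist_real_def by (auto simp: not_less)
  then obtain g where g: "\<And>N. g N \<ge> N" "\<And>N. \<bar>a (g N)\<bar> \<ge> e" by metis
  have sm: "strict_mono (sel g)" unfolding strict_mono_Suc_iff
    using g(1) by (simp add: Suc_le_lessD)
  have ge: "\<bar>a (sel g j)\<bar> \<ge> e" for j by (cases j) (simp_all add: g(2))
  obtain \<tau> where "strict_mono \<tau>" and lim: "(\<lambda>j. a (sel g (\<tau> j))) \<longlonglongrightarrow> 0" using H[OF sm] by blast
  then have "eventually (\<lambda>j. dist (a (sel g (\<tau> j))) 0 < e) sequentially"
    using e by (simp add: tendsto_iff)
  then obtain j where "\<bar>a (sel g (\<tau> j))\<bar> < e" by (auto simp: eventually_sequentially dist_real_def)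
  then show False using ge[of "\<tau> j"] by simp
qed

context dom begin

lemma sqsum:
  fixes h :: "nat \<Rightarrow> 'a \<Rightarrow> real"
  assumes hm: "\<And>i. h i \<in> borel_measurable (lebesgue_on \<Omega>)"
    and hi: "\<And>i. integrable (lebesgue_on \<Omega>) (\<lambda>x. (h i x)\<^sup>2)"
    and sm: "summable (\<lambda>i. \<integral>x. (h i x)\<^sup>2 \<partial>lebesgue_on \<Omega>)"
  shows "AE x in lebesgue_on \<Omega>. summable (\<lambda>i. (h i x)\<^sup>2)"
    and "integrable (lebesgue_on \<Omega>) (\<lambda>x. \<Sum>i. (h i x)\<^sup>2)"
proof -
  let ?M = "lebesgue_on \<Omega>"
  have m: "(\<lambda>x. ennreal ((h i x)\<^sup>2)) \<in> borel_measurable ?M" for i using hm[of i] by measurable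
  have "(\<integral>\<^sup>+ x. (\<Sum>i. ennreal ((h i x)\<^sup>2)) \<partial>?M) = (\<Sum>i. \<integral>\<^sup>+ x. ennreal ((h i x)\<^sup>2) \<partial>?M)"
    by (rule nn_integral_suminf[OF m])
  also have "\<dots> = (\<Sum>i. ennreal (\<integral>x. (h i x)\<^sup>2 \<partial>?M))"
    by (intro suminf_cong nn_integral_eq_integral hi) auto
  also have "\<dots> = ennreal (\<Sum>i. \<integral>x. (h i x)\<^sup>2 \<partial>?M)"
    by (rule suminf_ennreal2[OF _ sm]) (simp add: integral_nonneg_AE)
  finally have fin: "(\<integral>\<^sup>+ x. (\<Sum>i. ennreal ((h i x)\<^sup>2)) \<partial>?M) \<noteq> \<infinity>" by simp
  have "AE x in ?M. (\<Sum>i. ennreal ((h i x)\<^sup>2)) \<noteq> \<infinity>"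
    by (rule nn_integral_PInf_AE[OF _ fin]) (use m in measurable)
  then show as: "AE x in ?M. summable (\<lambda>i. (h i x)\<^sup>2)"
    by eventually_elim (rule summable_suminf_not_top, auto)
  show "integrable ?M (\<lambda>x. \<Sum>i. (h i x)\<^sup>2)"
    by (rule integrable_suminf) (use hi as sm in auto)
qed

lemma Lq_conv:
  fixes v :: "nat \<Rightarrow> 'a \<Rightarrow> real"
  assumes vm: "\<And>j. v j \<in> borel_measurable (lebesgue_on \<Omega>)" and us: "us \<in> L2 \<Omega>"
    and lim: "AE x in lebesgue_on \<Omega>. (\<lambda>j. v j x) \<longlonglongrightarrow> us x"
    and Dom: "Dom \<in> L2 \<Omega>" and bd: "\<And>j. AE x in lebesgue_on \<Omega>. \<bar>v j x\<bar> \<le> Dom x"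
    and q: "1 \<le> q" "q < 2"
  shows "(\<lambda>j. \<integral>x. \<bar>v j x - us x\<bar> powr q \<partial>lebesgue_on \<Omega>) \<longlonglongrightarrow> 0"
proof -
  let ?M = "lebesgue_on \<Omega>"
  have usm: "us \<in> borel_measurable ?M" using us by measurable
  have Dm: "Dom \<in> borel_measurable ?M" using Dom by measurable
  define w where "w = (\<lambda>x. 1 + (\<bar>Dom x\<bar> + \<bar>us x\<bar>)\<^sup>2)"
  have wi: "integrable ?M w" unfolding w_def
    using L2_sq[OF L2_add[OF L2_abs[OF Dom] L2_abs[OF us]]] by simp
  have "(\<lambda>j. \<integral>x. \<bar>v j x - us x\<bar> powr q \<partial>?M) \<longlonglongrightarrow> (\<integral>x. 0 \<partial>?M)"
  proof (rule integral_dominated_convergence[OF _ _ wi])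
    show "(\<lambda>x. 0::real) \<in> borel_measurable ?M" by simp
    show "(\<lambda>x. \<bar>v j x - us x\<bar> powr q) \<in> borel_measurable ?M" for j
      using vm[of j] usm by measurable
    show "AE x in ?M. (\<lambda>j. \<bar>v j x - us x\<bar> powr q) \<longlonglongrightarrow> 0"
      using lim
    proof eventually_elim
      case (elim x)
      have "(\<lambda>j. \<bar>v j x - us x\<bar>) \<longlonglongrightarrow> \<bar>us x - us x\<bar>" by (intro tendsto_intros elim)
      then have "(\<lambda>j. \<bar>v j x - us x\<bar> powr q) \<longlonglongrightarrow> 0 powr q"
        using q by (intro tendsto_powr') auto
      then show ?case by simp
    qed
    fix j
    show "AE x in ?M. norm (\<bar>v j x - us x\<bar> powr q) \<le> w x"
      using bd[of j]
    proof eventually_elim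
      case (elim x)
      define y where "y = \<bar>v j x - us x\<bar>"
      have y0: "y \<ge> 0" unfolding y_def by simp
      have yY: "y \<le> \<bar>Dom x\<bar> + \<bar>us x\<bar>" unfolding y_def using elim by linarith
      have "y powr q \<le> 1 + y\<^sup>2"
      proof (cases "y \<le> 1")
        case True then show ?thesis using powr_le1[of q y] q y0 by (simp add: add_increasing2)
      next
        case False
        then have "y powr q \<le> y powr 2" using q by (intro powr_mono) auto
        also have "y powr 2 = y\<^sup>2" using False by (simp add: powr_numeral)
        finally show ?thesis by simp
      qed
      also have "y\<^sup>2 \<le> (\<bar>Dom x\<bar> + \<bar>us x\<bar>)\<^sup>2" using yY y0 by (intro power_mono) auto
      finally show ?case unfolding w_def y_def by simp
    qed
  qed
  then show ?thesis by simp
qed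

lemma weak_id:
  fixes v :: "nat \<Rightarrow> 'a \<Rightarrow> real"
  assumes vm: "\<And>j. v j \<in> borel_measurable (lebesgue_on \<Omega>)" and us: "us \<in> L2 \<Omega>"
    and weak: "weak_conv_L2 \<Omega> v us"
    and Wm: "W \<in> borel_measurable (lebesgue_on \<Omega>)"
    and lim: "AE x in lebesgue_on \<Omega>. (\<lambda>j. v j x) \<longlonglongrightarrow> W x"
    and Dom: "Dom \<in> L2 \<Omega>" and bd: "\<And>j. AE x in lebesgue_on \<Omega>. \<bar>v j x\<bar> \<le> Dom x"
  shows "AE x in lebesgue_on \<Omega>. W x = us x"
proof -
  let ?M = "lebesgue_on \<Omega>"
  have Dm: "Dom \<in> borel_measurable ?M" using Dom by measurable
  have bdW: "AE x in ?M. \<bar>W x\<bar> \<le> Dom x"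
  proof -
    have "AE x in ?M. \<forall>j. \<bar>v j x\<bar> \<le> Dom x" using bd by (simp add: AE_all_countable)
    with lim show ?thesis
  proof eventually_elim
    case (elim x)
    have "(\<lambda>j. \<bar>v j x\<bar>) \<longlonglongrightarrow> \<bar>W x\<bar>" by (intro tendsto_intros elim)
    then show ?case using elim by (intro LIMSEQ_le_const2) auto
  qed
  qed
  have WL: "W \<in> L2 \<Omega>"
    by (rule L2_bound[OF Wm Dom]) (use bdW in \<open>auto elim!: AE_mp\<close>)
  define z where "z = (\<lambda>x. W x - us x)"
  have zL: "z \<in> L2 \<Omega>" unfolding z_def using WL us by auto
  have zm: "z \<in> borel_measurable ?M" using zL by measurable
  have "(\<lambda>j. \<integral>x. v j x * z x \<partial>?M) \<longlonglongrightarrow> (\<integral>x. W x * z x \<partial>?M)"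
  proof (rule integral_dominated_convergence[OF _ _ L2_prod[OF Dom L2_abs[OF zL]]])
    show "(\<lambda>x. W x * z x) \<in> borel_measurable ?M" using Wm zm by measurable
    show "(\<lambda>x. v j x * z x) \<in> borel_measurable ?M" for j using vm[of j] zm by measurable
    show "AE x in ?M. (\<lambda>j. v j x * z x) \<longlonglongrightarrow> W x * z x"
      using lim by eventually_elim (intro tendsto_intros)
    show "AE x in ?M. norm (v j x * z x) \<le> Dom x * \<bar>z x\<bar>" for j
      using bd[of j] by eventually_elim (auto simp: abs_mult intro!: mult_right_mono)
  qed
  moreover have "(\<lambda>j. \<integral>x. v j x * z x \<partial>?M) \<longlonglongrightarrow> (\<integral>x. us x * z x \<partial>?M)"
    using weak zL unfolding weak_conv_L2_def L2inner_def by blast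
  ultimately have eq: "(\<integral>x. W x * z x \<partial>?M) = (\<integral>x. us x * z x \<partial>?M)" by (rule LIMSEQ_unique)
  have "(\<integral>x. (z x)\<^sup>2 \<partial>?M) = (\<integral>x. W x * z x \<partial>?M) - (\<integral>x. us x * z x \<partial>?M)"
    using L2_prod[OF WL zL] L2_prod[OF us zL]
    by (simp add: z_def power2_eq_square left_diff_distrib)
  also have "\<dots> = 0" using eq by simp
  finally have "AE x in ?M. (z x)\<^sup>2 = 0"
    using integral_nonneg_eq_0_iff_AE[of ?M "\<lambda>x. (z x)\<^sup>2"] L2_sq[OF zL] by simp
  then show ?thesis by eventually_elim (simp add: z_def)
qed

end



lemma step_props:
  assumes b: "b > 0" and s: "s > 0" and al: "al > 0" and La: "L + al > 0"
    and fa: "feas b a"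
    and opt: "\<forall>c. feas b c \<longrightarrow> psi s ((L * u0 - g) / (L + al)) a \<le> psi s ((L * u0 - g) / (L + al)) c"
  shows "(a \<noteq> 0 \<longrightarrow> \<bar>a\<bar> \<ge> delta s b \<and> a = clipb b ((- g - L * (a - u0)) / al))
         \<and> \<bar>a\<bar> \<le> \<bar>(- g - L * (a - u0)) / al\<bar>"
proof (cases "a = 0")
  case True then show ?thesis by simp
next
  case False
  have nz: "a = clipb b ((L * u0 - g) / (L + al)) \<and> \<bar>a\<bar> \<ge> delta s b"
    by (rule opt_nz[OF b s fa _ False]) (use opt in blast)
  have "a = clipb b ((- g - L * (a - u0)) / al)"
    by (rule clip_rel[OF La al b nz[THEN conjunct1]]) simp
  moreover have "\<bar>clipb b ((- g - L * (a - u0)) / al)\<bar> \<le> \<bar>(- g - L * (a - u0)) / al\<bar>"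
    by (rule clipb_abs[OF b])
  ultimately have "\<bar>a\<bar> \<le> \<bar>(- g - L * (a - u0)) / al\<bar>" by metis
  then show ?thesis using nz \<open>a = clipb b ((- g - L * (a - u0)) / al)\<close> by blast
qed

lemma pw_conv:
  fixes U G :: "nat \<Rightarrow> real" and n :: "nat \<Rightarrow> nat"
  assumes b: "b > 0" and s: "s > 0" and al: "al > 0" and La: "L + al > 0"
    and A: "\<And>k. feas b (U (Suc k)) \<and> (\<forall>c. feas b c \<longrightarrow>
        psi s ((L * U k - G k) / (L + al)) (U (Suc k)) \<le> psi s ((L * U k - G k) / (L + al)) c)"
    and dc: "(\<lambda>k. U (Suc k) - U k) \<longlonglongrightarrow> 0"
    and n: "strict_mono n" and gc: "(\<lambda>j. G (n j)) \<longlonglongrightarrow> g"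
  shows "\<exists>w. (\<lambda>j. U (n j)) \<longlonglongrightarrow> w \<and> feas b w \<and>
     (\<forall>c. feas b c \<longrightarrow> psi s ((L * w - g) / (L + al)) w \<le> psi s ((L * w - g) / (L + al)) c)"
proof -
  define d where "d k = U (Suc k) - U k" for k
  have dc': "d \<longlonglongrightarrow> 0" using dc unfolding d_def .
  have P: "(U (Suc k) \<noteq> 0 \<longrightarrow> \<bar>U (Suc k)\<bar> \<ge> delta s b \<and> U (Suc k) = clipb b ((- G k - L * d k) / al))" for k
    using step_props[OF b s al La A[of k, THEN conjunct1] A[of k, THEN conjunct2]] unfolding d_def by blast
  have dp: "delta s b > 0" using delta_pos[OF s b] .
  obtain K where K: "\<And>k. k \<ge> K \<Longrightarrow> \<bar>d k\<bar> < delta s b"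
    using dc' dp unfolding LIMSEQ_def dist_real_def by fastforce
  have step0: "(U (Suc (Suc k)) = 0) = (U (Suc k) = 0)" if "k \<ge> K" for k
  proof (rule ccontr)
    assume ne: "(U (Suc (Suc k)) = 0) \<noteq> (U (Suc k) = 0)"
    have "\<bar>d (Suc k)\<bar> < delta s b" using K that by simp
    moreover have "\<bar>d (Suc k)\<bar> \<ge> delta s b"
      using ne P[of k] P[of "Suc k"] unfolding d_def by (cases "U (Suc k) = 0") auto
    ultimately show False by simp
  qed
  have stab: "(U (Suc k) = 0) = (U (Suc K) = 0)" if "k \<ge> K" for k
    using that
  proof (induction k rule: dec_induct)
    case (step k) then show ?case using step0[of k] by simp
  qed simp
  have ev: "eventually (\<lambda>j. n j \<ge> K) sequentially"
    using eventually_ge_at_top[of K] n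
    by (metis (mono_tags, lifting) eventually_sequentially le_trans seq_suble)
  have dn: "(\<lambda>j. d (n j)) \<longlonglongrightarrow> 0" using LIMSEQ_subseq_LIMSEQ[OF dc' n] by (simp add: o_def)
  obtain w where w1: "(\<lambda>j. U (Suc (n j))) \<longlonglongrightarrow> w"
  proof (cases "U (Suc K) = 0")
    case True
    have "eventually (\<lambda>j. U (Suc (n j)) = 0) sequentially"
      using ev by eventually_elim (use stab True in auto)
    then have "(\<lambda>j. U (Suc (n j))) \<longlonglongrightarrow> 0" by (rule tendsto_eventually)
    then show ?thesis using that by blast
  next
    case False
    have "eventually (\<lambda>j. U (Suc (n j)) = clipb b ((- G (n j) - L * d (n j)) / al)) sequentially"
      using ev by eventually_elim (use stab False P in metis)
    moreover have "(\<lambda>j. clipb b ((- G (n j) - L * d (n j)) / al)) \<longlonglongrightarrow> clipb b ((- g - L * 0) / al)"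
    proof -
      have "(\<lambda>j. (- G (n j) - L * d (n j)) / al) \<longlonglongrightarrow> (- g - L * 0) / al"
        by (intro tendsto_intros gc dn) (use al in simp)
      then show ?thesis
        using continuous_on_tendsto_compose[OF continuous_clipb] by auto
    qed
    ultimately have "(\<lambda>j. U (Suc (n j))) \<longlonglongrightarrow> clipb b ((- g - L * 0) / al)"
      using tendsto_cong by force
    then show ?thesis using that by blast
  qed
  have w0: "(\<lambda>j. U (n j)) \<longlonglongrightarrow> w"
  proof -
    have "(\<lambda>j. U (Suc (n j)) - d (n j)) \<longlonglongrightarrow> w - 0" by (intro tendsto_intros w1 dn)
    then show ?thesis by (simp add: d_def)
  qed
  have pl: "(\<lambda>j. (L * U (n j) - G (n j)) / (L + al)) \<longlonglongrightarrow> (L * w - g) / (L + al)"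
    by (intro tendsto_intros w0 gc) (use La in simp)
  have "feas b w \<and> (\<forall>c. feas b c \<longrightarrow> psi s ((L * w - g) / (L + al)) w \<le> psi s ((L * w - g) / (L + al)) c)"
    by (rule opt_limit[OF b s pl w1]) (use A in blast)+
  then show ?thesis using w0 by blast
qed



locale setting = smooth \<Omega> f gradf Lf for \<Omega> :: "'a::euclidean_space set" and f gradf Lf +
  fixes al be :: real and b :: ereal and L :: real and u :: "nat \<Rightarrow> 'a \<Rightarrow> real"
  assumes al: "al > 0" and be: "be > 0" and b: "b > 0" and LLf: "L > Lf" and Lf0: "Lf \<ge> 0"
    and iht: "iht_sequence \<Omega> f gradf al be b L u"
    and fbdd: "\<exists>m. \<forall>v \<in> L2 \<Omega>. m \<le> f v"
begin

lemma La: "L + al > 0" using al LLf Lf0 by simp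

lemma uU: "u k \<in> Uad \<Omega> b"
  using iht unfolding iht_sequence_def by (cases k) auto
lemma uL: "u k \<in> L2 \<Omega>" using uU by (rule Uad_L2)
lemma minm: "\<forall>v \<in> Uad \<Omega> b. iht_model \<Omega> f gradf L al be (u k) (u (Suc k)) \<le> iht_model \<Omega> f gradf L al be (u k) v"
  using iht unfolding iht_sequence_def by blast

definition F where "F k = f (u k) + gfun \<Omega> al be (u k)"

lemma gfun_nonneg: "gfun \<Omega> al be v \<ge> 0"
  unfolding gfun_def L0norm_def using al be by simp

lemma decr: "F (Suc k) + (L - Lf) / 2 * (L2norm \<Omega> (\<lambda>x. u (Suc k) x - u k x))\<^sup>2 \<le> F k"
proof -
  have "iht_model \<Omega> f gradf L al be (u k) (u (Suc k)) \<le> iht_model \<Omega> f gradf L al be (u k) (u k)"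
    using minm uU by blast
  also have "iht_model \<Omega> f gradf L al be (u k) (u k) = f (u k) + gfun \<Omega> al be (u k)"
    unfolding iht_model_def L2inner_def L2norm_def by simp
  finally have m: "f (u k) + L2inner \<Omega> (gradf (u k)) (\<lambda>x. u (Suc k) x - u k x)
     + L / 2 * (L2norm \<Omega> (\<lambda>x. u (Suc k) x - u k x))\<^sup>2 + gfun \<Omega> al be (u (Suc k)) \<le> f (u k) + gfun \<Omega> al be (u k)"
    unfolding iht_model_def by simp
  have d: "f (u (Suc k)) \<le> f (u k) + L2inner \<Omega> (gradf (u k)) (\<lambda>x. u (Suc k) x - u k x)
       + Lf / 2 * (L2norm \<Omega> (\<lambda>x. u (Suc k) x - u k x))\<^sup>2"
    by (rule descent[OF uL uL])
  have e: "(L - Lf) / 2 * X = L / 2 * X - Lf / 2 * X" for X by (simp add: field_simps)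
  show ?thesis using m d e[of "(L2norm \<Omega> (\<lambda>x. u (Suc k) x - u k x))\<^sup>2"] unfolding F_def by linarith
qed

lemma dsum: "summable (\<lambda>k. \<integral>x. (u (Suc k) x - u k x)\<^sup>2 \<partial>lebesgue_on \<Omega>)"
proof -
  obtain m where m: "\<And>v. v \<in> L2 \<Omega> \<Longrightarrow> m \<le> f v" using fbdd by blast
  define c where "c = (L - Lf) / 2"
  have c: "c > 0" unfolding c_def using LLf by simp
  define a where "a k = (\<integral>x. (u (Suc k) x - u k x)\<^sup>2 \<partial>lebesgue_on \<Omega>)" for k
  have a: "a k = (L2norm \<Omega> (\<lambda>x. u (Suc k) x - u k x))\<^sup>2" for k
    unfolding a_def using L2norm_sq[OF L2_diff[OF uL uL]] by simp
  have tel: "F n + c * (\<Sum>k<n. a k) \<le> F 0" for n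
  proof (induction n)
    case (Suc n)
    have "F (Suc n) + c * a n \<le> F n" using decr[of n] unfolding a c_def .
    then show ?case using Suc by (simp add: algebra_simps)
  qed simp
  have Fm: "F n \<ge> m" for n unfolding F_def using m[OF uL] gfun_nonneg[of "u n"] by (simp add: add_increasing2)
  have "(\<Sum>k<n. a k) \<le> (F 0 - m) / c" for n
  proof -
    have "c * (\<Sum>k<n. a k) \<le> F 0 - m" using tel[of n] Fm[of n] by linarith
    then show ?thesis using c by (simp add: pos_le_divide_eq mult.commute)
  qed
  moreover have "a k \<ge> 0" for k unfolding a by simp
  ultimately have "summable a" by (intro summableI_nonneg_bounded) auto
  then show ?thesis unfolding a_def .
qed

definition s where "s = be / (L + al)"
lemma s_pos: "s > 0" unfolding s_def using be La by simp

lemma PO: "AE x in lebesgue_on \<Omega>. \<forall>k. feas b (u (Suc k) x) \<and> (\<forall>c. feas b c \<longrightarrow>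
        psi s ((L * u k x - gradf (u k) x) / (L + al)) (u (Suc k) x)
        \<le> psi s ((L * u k x - gradf (u k) x) / (L + al)) c)"
proof -
  have "AE x in lebesgue_on \<Omega>. feas b (u (Suc k) x) \<and> (\<forall>c. feas b c \<longrightarrow>
        psi s ((L * u k x - gradf (u k) x) / (L + al)) (u (Suc k) x)
        \<le> psi s ((L * u k x - gradf (u k) x) / (L + al)) c)" for k
    using Uad_feas[OF uU[of "Suc k"]] pointwise_opt[OF uL uU La b be minm[of k]]
    by eventually_elim (simp add: s_def)
  then show ?thesis by (simp add: AE_all_countable)
qed

lemma DS: "AE x in lebesgue_on \<Omega>. summable (\<lambda>k. (u (Suc k) x - u k x)\<^sup>2)"
  and D2i: "integrable (lebesgue_on \<Omega>) (\<lambda>x. \<Sum>k. (u (Suc k) x - u k x)\<^sup>2)"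
  using sqsum[of "\<lambda>k x. u (Suc k) x - u k x", OF L2_meas[OF L2_diff[OF uL uL]] L2_sq[OF L2_diff[OF uL uL]] dsum]
  by auto

end



lemma term_le_suminf: "summable f \<Longrightarrow> (\<And>i. 0 \<le> f i) \<Longrightarrow> f i \<le> suminf (f :: nat \<Rightarrow> real)"
  using sum_le_suminf[of f "{i}"] by simp

lemma sq_summable_tendsto:
  fixes h :: "nat \<Rightarrow> real"
  assumes "summable (\<lambda>i. (h i)\<^sup>2)" shows "h \<longlonglongrightarrow> 0"
proof -
  have "(\<lambda>i. (h i)\<^sup>2) \<longlonglongrightarrow> 0" using summable_LIMSEQ_zero[OF assms] .
  then have "(\<lambda>i. sqrt ((h i)\<^sup>2)) \<longlonglongrightarrow> sqrt 0" by (intro tendsto_intros)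
  then have "(\<lambda>i. \<bar>h i\<bar>) \<longlonglongrightarrow> 0" by simp
  then show ?thesis by (simp add: tendsto_rabs_zero_iff)
qed

lemma abs_le_sqrt: "y\<^sup>2 \<le> Y \<Longrightarrow> \<bar>y\<bar> \<le> sqrt Y"
  by (rule real_le_rsqrt) simp

lemma sqrt_sq_abs: "(sqrt y)\<^sup>2 = \<bar>y\<bar>"
proof (cases "y \<ge> 0")
  case False
  have "sqrt y = - sqrt (- y)" by (simp add: real_sqrt_minus)
  then show ?thesis using False by simp
qed simp

context setting begin

lemma core:
  assumes gcc: "\<And>w w0. (\<And>n. w n \<in> L2 \<Omega>) \<Longrightarrow> w0 \<in> L2 \<Omega> \<Longrightarrow> weak_conv_L2 \<Omega> w w0 \<Longrightarrow>
                 (\<lambda>n. L2norm \<Omega> (\<lambda>x. gradf (w n) x - gradf w0 x)) \<longlonglongrightarrow> 0"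
    and m: "strict_mono m" and us: "us \<in> L2 \<Omega>" and weak: "weak_conv_L2 \<Omega> (\<lambda>j. u (m j)) us"
  shows "\<exists>\<tau> Dom. strict_mono \<tau> \<and> Dom \<in> L2 \<Omega> \<and>
     (\<forall>j. AE x in lebesgue_on \<Omega>. \<bar>u (m (\<tau> j)) x\<bar> \<le> Dom x) \<and>
     (AE x in lebesgue_on \<Omega>. (\<lambda>j. u (m (\<tau> j)) x) \<longlonglongrightarrow> us x) \<and>
     (AE x in lebesgue_on \<Omega>. us x \<in> Hsb s b ((L * us x - gradf us x) / (L + al)))"
proof -
  let ?M = "lebesgue_on \<Omega>"
  define gs where "gs = gradf us"
  have gsL: "gs \<in> L2 \<Omega>" unfolding gs_def using gradf_L2[OF us] .
  define X where "X j = L2norm \<Omega> (\<lambda>x. gradf (u (m j)) x - gs x)" for j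
  have "X \<longlonglongrightarrow> 0" unfolding X_def gs_def by (rule gcc[OF uL us weak])
  then have "(\<lambda>j. (X j)\<^sup>2) \<longlonglongrightarrow> 0" using tendsto_power[of X 0 sequentially 2] by simp
  then obtain \<tau> where \<tau>: "strict_mono \<tau>" and small: "\<And>j. \<bar>(X (\<tau> j))\<^sup>2\<bar> \<le> (1/2)^j"
    using subseq_small by blast
  define n where "n j = m (\<tau> j)" for j
  have n: "strict_mono n" unfolding n_def using strict_mono_o[OF m \<tau>] by (simp add: o_def)
  define h where "h j x = gradf (u (n j)) x - gs x" for j x
  have hL: "h j \<in> L2 \<Omega>" for j unfolding h_def using gradf_L2[OF uL] gsL by auto
  have hsum: "summable (\<lambda>j. \<integral>x. (h j x)\<^sup>2 \<partial>?M)"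
  proof (rule summable_comparison_test'[OF summable_geometric[of "1/2"]])
    fix j :: nat
    have "(\<integral>x. (h j x)\<^sup>2 \<partial>?M) = (X (\<tau> j))\<^sup>2"
      unfolding X_def using L2norm_sq[OF hL[of j]] by (simp add: h_def[abs_def] n_def)
    then show "norm (\<integral>x. (h j x)\<^sup>2 \<partial>?M) \<le> (1/2)^j" using small[of j] by simp
  qed simp
  have GS: "AE x in ?M. summable (\<lambda>j. (h j x)\<^sup>2)"
    and G2i: "integrable ?M (\<lambda>x. \<Sum>j. (h j x)\<^sup>2)"
    using sqsum[of h, OF L2_meas[OF hL] L2_sq[OF hL] hsum] by auto
  define G2 where "G2 x = (\<Sum>j. (h j x)\<^sup>2)" for x
  define D2 where "D2 x = (\<Sum>k. (u (Suc k) x - u k x)\<^sup>2)" for x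
  have G2m: "G2 \<in> borel_measurable ?M" unfolding G2_def using G2i by (rule borel_measurable_integrable)
  have D2m: "D2 \<in> borel_measurable ?M" unfolding D2_def using D2i by (rule borel_measurable_integrable)
  have sqL: "(\<lambda>x. sqrt (Y x)) \<in> L2 \<Omega>" if "integrable ?M Y" for Y
  proof (rule L2_boundf)
    show "(\<lambda>x. sqrt (Y x)) \<in> borel_measurable ?M" using borel_measurable_integrable[OF that] by measurable
    show "integrable ?M (\<lambda>x. \<bar>Y x\<bar>)" using that by simp
    show "AE x in ?M. (sqrt (Y x))\<^sup>2 \<le> \<bar>Y x\<bar>" by (simp add: sqrt_sq_abs)
  qed
  define Dom where "Dom x = sqrt (D2 x) + (\<bar>gs x\<bar> + sqrt (G2 x) + \<bar>L\<bar> * sqrt (D2 x)) / al" for x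
  have DomL: "Dom \<in> L2 \<Omega>"
  proof -
    have a: "(\<lambda>x. sqrt (D2 x)) \<in> L2 \<Omega>" using sqL D2i unfolding D2_def by blast
    have c: "(\<lambda>x. sqrt (G2 x)) \<in> L2 \<Omega>" using sqL G2i unfolding G2_def by blast
    have "(\<lambda>x. \<bar>gs x\<bar> + sqrt (G2 x) + \<bar>L\<bar> * sqrt (D2 x)) \<in> L2 \<Omega>"
      using L2_abs[OF gsL] c L2_scale[OF a] by (intro L2_add) auto
    then have "(\<lambda>x. (1/al) * (\<bar>gs x\<bar> + sqrt (G2 x) + \<bar>L\<bar> * sqrt (D2 x))) \<in> L2 \<Omega>" by (rule L2_scale)
    then show ?thesis unfolding Dom_def using L2_add[OF a] by simp
  qed
  note um[measurable] = L2_meas[OF uL]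
  define W where "W x = real_of_ereal (liminf (\<lambda>j. ereal (u (n j) x)))" for x
  have Wm: "W \<in> borel_measurable ?M" unfolding W_def by measurable
  have good: "AE x in ?M. (\<lambda>j. u (n j) x) \<longlonglongrightarrow> W x \<and> feas b (W x) \<and>
     (\<forall>c. feas b c \<longrightarrow> psi s ((L * W x - gs x) / (L + al)) (W x) \<le> psi s ((L * W x - gs x) / (L + al)) c)
     \<and> (\<forall>j. \<bar>u (n j) x\<bar> \<le> Dom x)"
    using PO DS GS
  proof eventually_elim
    case (elim x)
    have dc: "(\<lambda>k. u (Suc k) x - u k x) \<longlonglongrightarrow> 0" by (rule sq_summable_tendsto[OF elim(2)])
    have gc: "(\<lambda>j. gradf (u (n j)) x) \<longlonglongrightarrow> gs x"
    proof -
      have "(\<lambda>j. h j x) \<longlonglongrightarrow> 0" by (rule sq_summable_tendsto[OF elim(3)])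
      then have "(\<lambda>j. h j x + gs x) \<longlonglongrightarrow> 0 + gs x" by (intro tendsto_intros)
      then show ?thesis by (simp add: h_def)
    qed
    obtain w where w: "(\<lambda>j. u (n j) x) \<longlonglongrightarrow> w" "feas b w"
      "\<forall>c. feas b c \<longrightarrow> psi s ((L * w - gs x) / (L + al)) w \<le> psi s ((L * w - gs x) / (L + al)) c"
      using pw_conv[OF b s_pos al La, of "\<lambda>k. u k x" "\<lambda>k. gradf (u k) x", OF _ dc n gc] elim(1) by blast
    have "liminf (\<lambda>j. ereal (u (n j) x)) = ereal w"
      by (rule lim_imp_Liminf) (auto intro: tendsto_ereal w(1))
    then have Ww: "W x = w" unfolding W_def by simp
    have bd: "\<bar>u (n j) x\<bar> \<le> Dom x" for j
    proof -
      define k where "k = n j"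
      define d where "d = u (Suc k) x - u k x"
      have sp: "\<bar>u (Suc k) x\<bar> \<le> \<bar>(- gradf (u k) x - L * (u (Suc k) x - u k x)) / al\<bar>"
        using step_props[OF b s_pos al La, of "u (Suc k) x" "u k x" "gradf (u k) x"] elim(1) by blast
      have dD: "\<bar>d\<bar> \<le> sqrt (D2 x)"
        unfolding d_def D2_def by (rule abs_le_sqrt, rule term_le_suminf[OF elim(2)]) simp
      have hG: "\<bar>h j x\<bar> \<le> sqrt (G2 x)"
        unfolding G2_def by (rule abs_le_sqrt, rule term_le_suminf[OF elim(3)]) simp
      have "\<bar>(- gradf (u k) x - L * d) / al\<bar> = \<bar>gradf (u k) x + L * d\<bar> / al"
        using al by (simp add: abs_minus_commute)
      also have "\<dots> \<le> (\<bar>gs x\<bar> + \<bar>h j x\<bar> + \<bar>L\<bar> * \<bar>d\<bar>) / al"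
      proof -
        have "gradf (u k) x = gs x + h j x" unfolding h_def k_def by simp
        moreover have "\<bar>gs x + h j x + L * d\<bar> \<le> \<bar>gs x + h j x\<bar> + \<bar>L * d\<bar>" by (rule abs_triangle_ineq)
        moreover have "\<bar>gs x + h j x\<bar> \<le> \<bar>gs x\<bar> + \<bar>h j x\<bar>" by (rule abs_triangle_ineq)
        ultimately have "\<bar>gradf (u k) x + L * d\<bar> \<le> \<bar>gs x\<bar> + \<bar>h j x\<bar> + \<bar>L\<bar> * \<bar>d\<bar>"
          by (simp add: abs_mult)
        then show ?thesis using al by (simp add: divide_right_mono)
      qed
      also have "\<dots> \<le> (\<bar>gs x\<bar> + sqrt (G2 x) + \<bar>L\<bar> * sqrt (D2 x)) / al"
        using hG dD al by (intro divide_right_mono add_mono mult_left_mono) auto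
      finally have "\<bar>u (Suc k) x\<bar> \<le> (\<bar>gs x\<bar> + sqrt (G2 x) + \<bar>L\<bar> * sqrt (D2 x)) / al"
        using sp unfolding d_def by simp
      moreover have "\<bar>u k x\<bar> \<le> \<bar>u (Suc k) x\<bar> + \<bar>d\<bar>" unfolding d_def by simp
      ultimately show ?thesis using dD unfolding Dom_def k_def by simp
    qed
    show ?case using w Ww bd by simp
  qed
  have nweak: "weak_conv_L2 \<Omega> (\<lambda>j. u (n j)) us"
    unfolding weak_conv_L2_def
  proof safe
    fix z assume "z \<in> L2 \<Omega>"
    then have "(\<lambda>j. L2inner \<Omega> (u (m j)) z) \<longlonglongrightarrow> L2inner \<Omega> us z" using weak unfolding weak_conv_L2_def by blast
    from LIMSEQ_subseq_LIMSEQ[OF this \<tau>] show "(\<lambda>j. L2inner \<Omega> (u (n j)) z) \<longlonglongrightarrow> L2inner \<Omega> us z"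
      by (simp add: o_def n_def)
  qed
  have bdj: "AE x in ?M. \<bar>u (n j) x\<bar> \<le> Dom x" for j using good by eventually_elim blast
  have Wu: "AE x in ?M. W x = us x"
    by (rule weak_id[OF _ us nweak Wm _ DomL bdj]) (use good in auto)
  have lim: "AE x in ?M. (\<lambda>j. u (n j) x) \<longlonglongrightarrow> us x" using good Wu by eventually_elim simp
  have H: "AE x in ?M. us x \<in> Hsb s b ((L * us x - gradf us x) / (L + al))"
    using good Wu
  proof eventually_elim
    case (elim x)
    then show ?case using opt_H[OF b s_pos, of "us x"] by (simp add: gs_def)
  qed
  show ?thesis using \<tau> DomL bdj lim H unfolding n_def by blast
qed

end



theorem mainTheorem11:
  fixes \<Omega> :: "'a::euclidean_space set"
    and f :: "('a \<Rightarrow> real) \<Rightarrow> real"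
    and gradf :: "('a \<Rightarrow> real) \<Rightarrow> ('a \<Rightarrow> real)"
    and \<alpha> \<beta> L Lf :: real and b :: ereal
    and u :: "nat \<Rightarrow> 'a \<Rightarrow> real" and kn :: "nat \<Rightarrow> nat" and ustar :: "'a \<Rightarrow> real"
  assumes \<Omega>_open: "open \<Omega>" and \<Omega>_bounded: "bounded \<Omega>"
    and \<alpha>_pos: "\<alpha> > 0" and \<beta>_pos: "\<beta> > 0" and b_pos: "b > 0"
    \<comment> \<open>f is a function on L^2(\<Omega>): it respects a.e. equality\<close>
    and f_wd: "\<And>v w. v \<in> L2 \<Omega> \<Longrightarrow> w \<in> L2 \<Omega> \<Longrightarrow>
                 (AE x in lebesgue_on \<Omega>. v x = w x) \<Longrightarrow> f v = f w"
    and gradf_wd: "\<And>v w. v \<in> L2 \<Omega> \<Longrightarrow> w \<in> L2 \<Omega> \<Longrightarrow>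
                 (AE x in lebesgue_on \<Omega>. v x = w x) \<Longrightarrow>
                 (AE x in lebesgue_on \<Omega>. gradf v x = gradf w x)"
    \<comment> \<open>weakly lower semicontinuous\<close>
    and f_wlsc: "\<And>w w0. (\<And>n. w n \<in> L2 \<Omega>) \<Longrightarrow> w0 \<in> L2 \<Omega> \<Longrightarrow> weak_conv_L2 \<Omega> w w0 \<Longrightarrow>
                 ereal (f w0) \<le> liminf (\<lambda>n. ereal (f (w n)))"
    \<comment> \<open>bounded from below\<close>
    and f_bdd: "\<exists>m. \<forall>v \<in> L2 \<Omega>. m \<le> f v"
    \<comment> \<open>Frechet differentiable with gradient (Riesz representative) gradf\<close>
    and gradf_L2: "\<And>v. v \<in> L2 \<Omega> \<Longrightarrow> gradf v \<in> L2 \<Omega>"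
    and f_frechet: "\<And>v \<epsilon>. v \<in> L2 \<Omega> \<Longrightarrow> \<epsilon> > 0 \<Longrightarrow>
                 \<exists>\<delta>>0. \<forall>h \<in> L2 \<Omega>. L2norm \<Omega> h < \<delta> \<longrightarrow>
                   \<bar>f (\<lambda>x. v x + h x) - f v - L2inner \<Omega> (gradf v) h\<bar> \<le> \<epsilon> * L2norm \<Omega> h"
    \<comment> \<open>gradient Lipschitz with constant Lf\<close>
    and gradf_lip: "\<And>v w. v \<in> L2 \<Omega> \<Longrightarrow> w \<in> L2 \<Omega> \<Longrightarrow>
                 L2norm \<Omega> (\<lambda>x. gradf v x - gradf w x) \<le> Lf * L2norm \<Omega> (\<lambda>x. v x - w x)"
    and L_gt: "L > Lf"
    \<comment> \<open>gradf completely continuous\<close>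
    and gradf_cc: "\<And>w w0. (\<And>n. w n \<in> L2 \<Omega>) \<Longrightarrow> w0 \<in> L2 \<Omega> \<Longrightarrow> weak_conv_L2 \<Omega> w w0 \<Longrightarrow>
                 (\<lambda>n. L2norm \<Omega> (\<lambda>x. gradf (w n) x - gradf w0 x)) \<longlonglongrightarrow> 0"
    \<comment> \<open>IHT iterates and weakly convergent subsequence\<close>
    and iht: "iht_sequence \<Omega> f gradf \<alpha> \<beta> b L u"
    and kn_mono: "strict_mono kn"
    and ustar_L2: "ustar \<in> L2 \<Omega>"
    and weak: "weak_conv_L2 \<Omega> (\<lambda>n. u (kn n)) ustar"
  shows "(\<forall>q::real. 1 \<le> q \<and> q < 2 \<longrightarrow>
            (\<lambda>n. \<integral>x. \<bar>u (kn n) x - ustar x\<bar> powr q \<partial>lebesgue_on \<Omega>) \<longlonglongrightarrow> 0)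
       \<and> (AE x in lebesgue_on \<Omega>.
            ustar x \<in> Hsb (\<beta> / (L + \<alpha>)) b ((L * ustar x - gradf ustar x) / (L + \<alpha>)))"
  proof -
  interpret dom \<Omega> using \<Omega>_open \<Omega>_bounded by unfold_locales
  let ?M = "lebesgue_on \<Omega>"
  have fm: "finite_measure ?M" by (rule fin)
  have em: "emeasure ?M \<Omega> = ennreal (measure ?M \<Omega>)"
    using finite_measure.emeasure_eq_measure[OF fm] .
  have \<Omega>s: "\<Omega> \<in> sets ?M" using sets.top[of ?M] by simp
  show ?thesis
  proof (cases "measure ?M \<Omega> = 0")
    case True
    have AEall: "AE x in ?M. P x" for P
      by (rule AE_I[of _ _ \<Omega>]) (use em True \<Omega>s in auto)
    have "(\<integral>x. \<bar>u (kn n) x - ustar x\<bar> powr q \<partial>?M) = 0" for n q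
      by (rule integral_eq_zero_AE[OF AEall])
    then show ?thesis using AEall by simp
  next
    case False
    then have mpos: "measure ?M \<Omega> > 0" using measure_nonneg[of ?M \<Omega>] by linarith
    have "L2norm \<Omega> (\<lambda>x. gradf (\<lambda>x. 1) x - gradf (\<lambda>x. 0) x) \<le> Lf * L2norm \<Omega> (\<lambda>x. 1 - 0)"
      using gradf_lip[of "\<lambda>x. 1" "\<lambda>x. 0"] by simp
    moreover have "L2norm \<Omega> (\<lambda>x. 1 - 0) = sqrt (measure ?M \<Omega>)"
      unfolding L2norm_def by simp
    ultimately have "0 \<le> Lf * sqrt (measure ?M \<Omega>)" using L2norm_nonneg order_trans by metis
    then have Lf0: "Lf \<ge> 0" using mpos by (simp add: zero_le_mult_iff)
    interpret setting \<Omega> f gradf Lf \<alpha> \<beta> b L u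
      by unfold_locales (use gradf_L2 f_frechet gradf_lip \<alpha>_pos \<beta>_pos b_pos L_gt Lf0 iht f_bdd in auto)
    have H: "AE x in ?M. ustar x \<in> Hsb (\<beta> / (L + \<alpha>)) b ((L * ustar x - gradf ustar x) / (L + \<alpha>))"
      using core[OF gradf_cc kn_mono ustar_L2 weak] unfolding s_def by blast
    have "(\<lambda>n. \<integral>x. \<bar>u (kn n) x - ustar x\<bar> powr q \<partial>?M) \<longlonglongrightarrow> 0" if q: "1 \<le> q" "q < 2" for q
    proof (rule subseq_principle)
      fix \<sigma> :: "nat \<Rightarrow> nat" assume \<sigma>: "strict_mono \<sigma>"
      have sm: "strict_mono (\<lambda>j. kn (\<sigma> j))" using strict_mono_o[OF kn_mono \<sigma>] by (simp add: o_def)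
      have wk: "weak_conv_L2 \<Omega> (\<lambda>j. u (kn (\<sigma> j))) ustar"
        unfolding weak_conv_L2_def
      proof safe
        fix z assume "z \<in> L2 \<Omega>"
        then have "(\<lambda>j. L2inner \<Omega> (u (kn j)) z) \<longlonglongrightarrow> L2inner \<Omega> ustar z"
          using weak unfolding weak_conv_L2_def by blast
        from LIMSEQ_subseq_LIMSEQ[OF this \<sigma>]
        show "(\<lambda>j. L2inner \<Omega> (u (kn (\<sigma> j))) z) \<longlonglongrightarrow> L2inner \<Omega> ustar z" by (simp add: o_def)
      qed
      obtain \<tau> Dom where \<tau>: "strict_mono \<tau>" and DomL: "Dom \<in> L2 \<Omega>"
        and bd: "\<forall>j. AE x in ?M. \<bar>u (kn (\<sigma> (\<tau> j))) x\<bar> \<le> Dom x"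
        and lim: "AE x in ?M. (\<lambda>j. u (kn (\<sigma> (\<tau> j))) x) \<longlonglongrightarrow> ustar x"
        using core[OF gradf_cc sm ustar_L2 wk] by blast
      have "(\<lambda>j. \<integral>x. \<bar>u (kn (\<sigma> (\<tau> j))) x - ustar x\<bar> powr q \<partial>?M) \<longlonglongrightarrow> 0"
        by (rule Lq_conv[OF _ ustar_L2 lim DomL _ q]) (use bd L2_meas[OF uL] in auto)
      then show "\<exists>\<tau>. strict_mono \<tau> \<and> (\<lambda>j. \<integral>x. \<bar>u (kn (\<sigma> (\<tau> j))) x - ustar x\<bar> powr q \<partial>?M) \<longlonglongrightarrow> 0"
        using \<tau> by blast
    qed
    then show ?thesis using H by blast
  qed
qed


end
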